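(* Let $q$ be a prime power, $d$ a positive divisor of $q-1$, $m=\frac{q-1}{d}$, $C$ the index $d$ subgroup of $\mathbb{F}_q^{\ast}$, and $\omega$ a primitive root of $\mathbb{F}_q$; put $C_i=\omega^iC$. Then $\operatorname{GCP}(d,q)$ is isomorphic as a permutation group to $\operatorname{Hol}(C)\wr_{\mathrm{imp}}\operatorname{Sym}(d)$. More precisely, let $\beta_\omega:C\times\{0,\dots,d-1\}\to\mathbb{F}_q^{\ast}$, $(c,i)\mapsto c\omega^i$, and let $\iota_\omega$ map the wreath product element $(\psi,(\lambda(s_i,b_i))_{i=0,\dots,d-1})$ to the restriction to $\mathbb{F}_q^{\ast}$ of $$f_\omega\big((\omega^{\psi(i)-is_{\psi(i)}}b_{\psi(i)})_{i=0,\dots,d-1},\,(s_{\psi(i)})_{i=0,\dots,d-1}\big)$$ (with exponents $s_{\psi(i)}$ taken as representatives in $\{1,\dots,m\}$). Then $\beta_\omega$ is a bijection, $\iota_\omega$ is a group isomorphism onto $\operatorname{GCP}(d,q)$, and $\beta_\omega(x^g)=\beta_\omega(x)^{\iota_\omega(g)}$ for all $g$ and all $x\in C\times\{0,\dots,d-1\}$. The inverse of $\iota_\omega$ sends $f_\omega(\vec a,\vec r)_{\mid\mathbb{F}_q^{\ast}}\in\operatorname{GCP}(d,q)$ to $$\big(\psi,(\lambda(r_{\psi^{-1}(i)},\,\omega^{r_{\psi^{-1}(i)}\psi^{-1}(i)-i}a_{\psi^{-1}(i)}))_{i=0,\dots,d-1}\big),$$ where $\psi\in\operatorname{Sym}(d)$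 is the unique permutation with $f_\omega(\vec a,\vec r)(C_i)=C_{\psi(i)}$ for all $i$. Moreover: (1) $\iota_\omega^{-1}(\operatorname{CP}(d,q))$ is the set of all elements $(\psi,(\lambda(s,b_i))_{i})$ with $\psi\in\operatorname{Sym}(d)$, $s$ an integer coprime to $m$ (the same for all $i$), and $b_0,\dots,b_{d-1}\in C$; (2) $\iota_\omega^{-1}(\operatorname{FOCP}(d,q))$ is the set of all elements $(\psi,(\lambda(1,b_i))_i)$ with $\psi\in\operatorname{Sym}(d)$ and $b_i\in C$, i.e. the subgroup $C_{\mathrm{reg}}\wr_{\mathrm{imp}}\operatorname{Sym}(d)$, where $C_{\mathrm{reg}}=\{\lambda(1,c):c\in C\}$.
   Context: Groups act on the right: for permutations $\sigma,\psi$, the product $\sigma\psi$ means "apply $\sigma$ first, then $\psi$". For $\vec a=(a_0,\dots,a_{d-1})\in\mathbb{F}_q^d$ and $\vec r=(r_0,\dots,r_{d-1})\in\{1,\dots,m\}^d$, $f_\omega(\vec a,\vec r):\mathbb{F}_q\to\mathbb{F}_q$ is the map with $0\mapsto 0$ and $x\mapsto a_ix^{r_i}$ for $x\in C_i$ (an "index $d$ generalized cyclotomic mapping"); if all $r_i$ equal a common $r$ it is an "$r$-th order cyclotomic mapping", and "first-order" if $r=1$. $\operatorname{GCP}(d,q)$ (resp. $\operatorname{CP}(d,q)$, $\operatorname{FOCP}(d,q)$) is the permutation group on $\mathbb{F}_q^{\ast}$ consisting of restrictions to $\mathbb{F}_q^{\ast}$ of those index $d$ generalized cyclotomic mappings (resp.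 $r$-th order cyclotomic mappings for some $r$, resp. first-order cyclotomic mappings) that are permutations of $\mathbb{F}_q$. $\operatorname{Hol}(C)$ is the permutation group on $C$ of all maps $\lambda(r,a):c\mapsto ac^r$ with $a\in C$ and $r$ an integer coprime to $|C|=m$. For a permutation group $G\le\operatorname{Sym}(\Omega)$, $\operatorname{Sym}(d)$ denotes the symmetric group on $\{0,\dots,d-1\}$, and $G\wr_{\mathrm{imp}}\operatorname{Sym}(d)$ is the permutation group on $\Omega\times\{0,\dots,d-1\}$ whose elements are pairs $(\sigma,(g_0,\dots,g_{d-1}))$ with $\sigma\in\operatorname{Sym}(d)$, $g_i\in G$, acting by $(x,i)\mapsto(g_{\sigma(i)}(x),\sigma(i))$. An isomorphism of permutation groups $G\le\operatorname{Sym}(\Omega)\to H\le\operatorname{Sym}(\Lambda)$ is a pair $(\beta,\iota)$ with $\beta:\Omega\to\Lambda$ a bijection and $\iota:G\to H$ a group isomorphism with $\beta(x^g)=\beta(x)^{\iota(g)}$. *)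

theory Defs
  imports "HOL-Algebra.Group" "HOL-Combinatorics.Permutations"
begin

text \<open>Conventions: the finite field F_q is a type 'a of class field and finite, q = card (UNIV :: 'a set).
  Permutations of F_q^* are represented by maps 'a => 'a (fixing 0); permutations of C
  are represented by maps 'a => 'a that are the identity outside C.
  Groups act on the right: the product f * g means "apply f first, then g".\<close>

definition primitive_root :: "'a::{field,finite} \<Rightarrow> bool" where
  "primitive_root w \<longleftrightarrow> w \<noteq> 0 \<and> (\<forall>x. x \<noteq> 0 \<longrightarrow> (\<exists>k::nat. x = w ^ k))"

definition subgrpC :: "nat \<Rightarrow> 'a::{field,finite} set" where
  "subgrpC d = {x ^ d | x. x \<noteq> (0::'a)}"

definition cyc_coset :: "'a::{field,finite} \<Rightarrow> nat \<Rightarrow> nat \<Rightarrow> 'a set" where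
  "cyc_coset w d i = (\<lambda>c. w ^ i * c) ` subgrpC d"

definition cidx :: "'a::{field,finite} \<Rightarrow> nat \<Rightarrow> 'a \<Rightarrow> nat" where
  "cidx w d x = (THE i. i < d \<and> x \<in> cyc_coset w d i)"

definition gen_cyc_map :: "'a::{field,finite} \<Rightarrow> nat \<Rightarrow> (nat \<Rightarrow> 'a) \<Rightarrow> (nat \<Rightarrow> nat) \<Rightarrow> 'a \<Rightarrow> 'a" where
  "gen_cyc_map w d a r = (\<lambda>x. if x = 0 then 0 else a (cidx w d x) * x ^ r (cidx w d x))"

definition GCP :: "'a::{field,finite} \<Rightarrow> nat \<Rightarrow> ('a \<Rightarrow> 'a) set" where
  "GCP w d = {gen_cyc_map w d a r | a r.
      (\<forall>i<d. r i \<in> {1..(card (UNIV :: 'a set) - 1) div d}) \<and> bij (gen_cyc_map w d a r)}"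

definition CP :: "'a::{field,finite} \<Rightarrow> nat \<Rightarrow> ('a \<Rightarrow> 'a) set" where
  "CP w d = {gen_cyc_map w d a r | a r.
      (\<forall>i<d. r i \<in> {1..(card (UNIV :: 'a set) - 1) div d}) \<and> (\<exists>\<rho>. \<forall>i<d. r i = \<rho>)
      \<and> bij (gen_cyc_map w d a r)}"

definition FOCP :: "'a::{field,finite} \<Rightarrow> nat \<Rightarrow> ('a \<Rightarrow> 'a) set" where
  "FOCP w d = {gen_cyc_map w d a r | a r. (\<forall>i<d. r i = 1) \<and> bij (gen_cyc_map w d a r)}"

definition perm_grp :: "('b \<Rightarrow> 'b) set \<Rightarrow> ('b \<Rightarrow> 'b) monoid" where
  "perm_grp S = \<lparr>carrier = S, monoid.mult = (\<lambda>f g. g \<circ> f), monoid.one = id\<rparr>"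

definition hol_map :: "'a::field set \<Rightarrow> int \<Rightarrow> 'a \<Rightarrow> 'a \<Rightarrow> 'a" where
  "hol_map C s b = (\<lambda>c. if c \<in> C then b * c powi s else c)"

definition Hol :: "'a::field set \<Rightarrow> nat \<Rightarrow> ('a \<Rightarrow> 'a) set" where
  "Hol C m = {hol_map C s b | s b. b \<in> C \<and> coprime s (int m)}"

definition wr_carrier :: "('b \<Rightarrow> 'b) set \<Rightarrow> nat \<Rightarrow> ((nat \<Rightarrow> nat) \<times> (nat \<Rightarrow> 'b \<Rightarrow> 'b)) set" where
  "wr_carrier G d = {(\<sigma>, g). \<sigma> permutes {..<d} \<and> (\<forall>i<d. g i \<in> G) \<and> (\<forall>i. d \<le> i \<longrightarrow> g i = id)}"

fun wr_act :: "(nat \<Rightarrow> nat) \<times> (nat \<Rightarrow> 'b \<Rightarrow> 'b) \<Rightarrow> 'b \<times> nat \<Rightarrow> 'b \<times> nat" where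
  "wr_act (\<sigma>, g) (x, i) = (g (\<sigma> i) x, \<sigma> i)"

text \<open>Product "apply (sigma,g) first, then (tau,h)".\<close>
fun wr_mult :: "nat \<Rightarrow> (nat \<Rightarrow> nat) \<times> (nat \<Rightarrow> 'b \<Rightarrow> 'b) \<Rightarrow> (nat \<Rightarrow> nat) \<times> (nat \<Rightarrow> 'b \<Rightarrow> 'b)
    \<Rightarrow> (nat \<Rightarrow> nat) \<times> (nat \<Rightarrow> 'b \<Rightarrow> 'b)" where
  "wr_mult d (\<sigma>, g) (\<tau>, h) =
     (\<tau> \<circ> \<sigma>, \<lambda>j. if j < d then h j \<circ> g (inv_into {..<d} \<tau> j) else id)"

definition wr_group :: "('b \<Rightarrow> 'b) set \<Rightarrow> nat \<Rightarrow> ((nat \<Rightarrow> nat) \<times> (nat \<Rightarrow> 'b \<Rightarrow> 'b)) monoid" where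
  "wr_group G d = \<lparr>carrier = wr_carrier G d, monoid.mult = wr_mult d, monoid.one = (id, \<lambda>_. id)\<rparr>"

fun beta :: "'a::{field,finite} \<Rightarrow> 'a \<times> nat \<Rightarrow> 'a" where
  "beta w (c, i) = c * w ^ i"

definition hol_param :: "'a::field set \<Rightarrow> nat \<Rightarrow> ('a \<Rightarrow> 'a) \<Rightarrow> nat \<times> 'a" where
  "hol_param C m g = (SOME (s, b). s \<in> {1..m} \<and> b \<in> C \<and> g = hol_map C (int s) b)"

fun iota :: "'a::{field,finite} \<Rightarrow> nat \<Rightarrow> (nat \<Rightarrow> nat) \<times> (nat \<Rightarrow> 'a \<Rightarrow> 'a) \<Rightarrow> 'a \<Rightarrow> 'a" where
  "iota w d (\<psi>, g) =
     (let C = subgrpC d; m = (card (UNIV :: 'a set) - 1) div d;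
          s = (\<lambda>j. fst (hol_param C m (g j))); b = (\<lambda>j. snd (hol_param C m (g j)))
      in gen_cyc_map w d
           (\<lambda>i. w powi (int (\<psi> i) - int i * int (s (\<psi> i))) * b (\<psi> i))
           (\<lambda>i. s (\<psi> i)))"

text \<open>The claimed inverse image of f_w(a, r), given the permutation psi of the cosets.\<close>
definition iota_inv_formula :: "'a::{field,finite} \<Rightarrow> nat \<Rightarrow> (nat \<Rightarrow> nat) \<Rightarrow> (nat \<Rightarrow> 'a) \<Rightarrow> (nat \<Rightarrow> nat)
    \<Rightarrow> (nat \<Rightarrow> nat) \<times> (nat \<Rightarrow> 'a \<Rightarrow> 'a)" where
  "iota_inv_formula w d \<psi> a r =
     (\<psi>, \<lambda>i. if i < d then
               (let j = inv_into {..<d} \<psi> i in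
                 hol_map (subgrpC d) (int (r j)) (w powi (int (r j) * int j - int i) * a j))
             else id)"

end

theory Submission
  imports Defs "HOL-Number_Theory.Cong"
begin
locale cycs =
  fixes w :: "'a::{field,finite}" and d n m :: nat and C :: "'a set"
  assumes d_pos: "0 < d" and n_def: "n = card (UNIV::'a set) - 1" and dvd_dn: "d dvd n"
    and m_def: "m = n div d" and C_def: "C = subgrpC d" and prim: "primitive_root w"
begin

lemma w_nz[simp]: "w \<noteq> 0" using prim by (simp add: primitive_root_def)

lemma wpow_nz[simp]: "w ^ k \<noteq> 0" using w_nz by simp

lemma card_nz: "card (UNIV - {0::'a}) = n"
  by (simp add: card_Diff_singleton n_def)

lemma n_pos: "0 < n"
proof -
  have "(1::'a) \<in> UNIV - {0}" by simp
  hence "card (UNIV - {0::'a}) > 0" by (metis card_gt_0_iff empty_iff finite)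
  thus ?thesis using card_nz by simp
qed

lemma exists_period: "\<exists>k>0. w ^ k = 1"
proof -
  have "\<not> inj_on (\<lambda>k. w ^ k) {..n}"
  proof
    assume "inj_on (\<lambda>k. w ^ k) {..n}"
    hence "card ((\<lambda>k. w ^ k) ` {..n}) = n + 1" by (simp add: card_image)
    moreover have "(\<lambda>k. w ^ k) ` {..n} \<subseteq> UNIV - {0}" by auto
    hence "card ((\<lambda>k. w ^ k) ` {..n}) \<le> n" using card_nz by (metis card_mono finite)
    ultimately show False by simp
  qed
  then obtain i j where ij: "i \<le> n" "j \<le> n" "i \<noteq> j" "w ^ i = w ^ j"
    unfolding inj_on_def by auto
  { fix i j :: nat assume "i < j" "w ^ i = w ^ j"
    hence "w ^ i * w ^ (j - i) = w ^ i * 1" by (metis le_add_diff_inverse less_imp_le mult_1_right power_add)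
    hence "w ^ (j - i) = 1" by simp
    hence "\<exists>k>0. w ^ k = 1" using \<open>i < j\<close> by (intro exI[of _ "j - i"]) auto }
  with ij show ?thesis by (metis linorder_neqE_nat)
qed

definition ordw where "ordw = (LEAST k. 0 < k \<and> w ^ k = 1)"

lemma ordw: "0 < ordw" "w ^ ordw = 1"
  using LeastI_ex[OF exists_period] unfolding ordw_def by auto

lemma ordw_min: "0 < k \<Longrightarrow> k < ordw \<Longrightarrow> w ^ k \<noteq> 1"
  unfolding ordw_def using not_less_Least by blast

lemma pow_mod_ordw: "w ^ k = w ^ (k mod ordw)"
proof -
  have "w ^ k = w ^ (ordw * (k div ordw) + k mod ordw)" by simp
  also have "\<dots> = w ^ (k mod ordw)" by (simp only: power_add power_mult ordw) simp
  finally show ?thesis .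
qed

lemma inj_ordw: "inj_on (\<lambda>k. w ^ k) {..<ordw}"
proof (rule inj_onI, rule ccontr)
  fix i j assume ij: "i \<in> {..<ordw}" "j \<in> {..<ordw}" "w ^ i = w ^ j" "i \<noteq> j"
  { fix i j :: nat assume "i < j" "j < ordw" "w ^ i = w ^ j"
    hence "w ^ i * w ^ (j - i) = w ^ i * 1" by (metis le_add_diff_inverse less_imp_le mult_1_right power_add)
    hence "w ^ (j - i) = 1" by simp
    hence False using ordw_min[of "j - i"] \<open>i < j\<close> \<open>j < ordw\<close> by simp }
  with ij show False by (metis lessThan_iff linorder_neqE_nat)
qed

lemma ordw_eq: "ordw = n"
proof -
  have "(\<lambda>k. w ^ k) ` {..<ordw} = UNIV - {0}"
  proof
    show "(\<lambda>k. w ^ k) ` {..<ordw} \<subseteq> UNIV - {0}" by auto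
    show "UNIV - {0} \<subseteq> (\<lambda>k. w ^ k) ` {..<ordw}"
    proof
      fix x assume "x \<in> UNIV - {0::'a}"
      then obtain k where "x = w ^ k" using prim unfolding primitive_root_def by auto
      hence "x = w ^ (k mod ordw)" using pow_mod_ordw by simp
      thus "x \<in> (\<lambda>k. w ^ k) ` {..<ordw}" using ordw(1) by auto
    qed
  qed
  hence "card {..<ordw} = n" using card_image[OF inj_ordw] card_nz by simp
  thus ?thesis by simp
qed

lemma w_n: "w ^ n = 1" using ordw ordw_eq by simp

lemma pow_mod: "w ^ k = w ^ (k mod n)" using pow_mod_ordw ordw_eq by simp

lemma pow_eq_iff: "w ^ a = w ^ b \<longleftrightarrow> a mod n = b mod n"
proof
  assume "w ^ a = w ^ b"
  hence "w ^ (a mod n) = w ^ (b mod n)" using pow_mod by metis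
  thus "a mod n = b mod n" using inj_ordw ordw_eq n_pos unfolding inj_on_def by simp
next
  assume "a mod n = b mod n" thus "w ^ a = w ^ b" using pow_mod by metis
qed

lemma nz_pow: "x \<noteq> 0 \<Longrightarrow> \<exists>k. x = w ^ k"
  using prim unfolding primitive_root_def by auto

lemma dm: "d * m = n" using dvd_dn m_def by simp

lemma m_pos: "0 < m" using dm n_pos by (cases m) auto

lemma C_iff: "x \<in> C \<longleftrightarrow> (\<exists>k. x = w ^ (d * k))"
proof
  assume "x \<in> C"
  then obtain y where "x = y ^ d" "y \<noteq> 0" unfolding C_def subgrpC_def by auto
  then obtain k where "y = w ^ k" using nz_pow by auto
  hence "x = w ^ (d * k)" using \<open>x = y ^ d\<close> by (simp add: power_mult[symmetric] mult.commute)
  thus "\<exists>k. x = w ^ (d * k)" by blast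
next
  assume "\<exists>k. x = w ^ (d * k)"
  then obtain k where "x = w ^ (d * k)" by blast
  hence "x = (w ^ k) ^ d" by (simp add: power_mult[symmetric] mult.commute)
  thus "x \<in> C" unfolding C_def subgrpC_def using wpow_nz by blast
qed

lemma wpow_C_iff: "w ^ j \<in> C \<longleftrightarrow> d dvd j"
proof
  assume "w ^ j \<in> C"
  then obtain k where "w ^ j = w ^ (d * k)" using C_iff by auto
  hence "j mod n = (d * k) mod n" using pow_eq_iff by auto
  hence "j mod n mod d = (d * k) mod n mod d" by simp
  hence "j mod d = (d * k) mod d" by (simp only: mod_mod_cancel[OF dvd_dn])
  thus "d dvd j" by (simp add: dvd_eq_mod_eq_0)
next
  assume "d dvd j"
  then obtain k where "j = d * k" by (auto elim: dvdE)
  thus "w ^ j \<in> C" by (simp only: C_iff) blast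
qed

lemma C_nz: "c \<in> C \<Longrightarrow> c \<noteq> 0" using C_iff by auto

lemma one_C: "1 \<in> C" using C_iff[of 1] by (metis mult_0_right power_0)

lemma C_mult: "a \<in> C \<Longrightarrow> b \<in> C \<Longrightarrow> a * b \<in> C"
  unfolding C_iff by (auto simp: power_add[symmetric] distrib_left[symmetric])

lemma C_pow_m: "c \<in> C \<Longrightarrow> c ^ m = 1"
proof -
  assume "c \<in> C"
  then obtain k where "c = w ^ (d * k)" using C_iff by auto
  hence "c ^ m = w ^ (d * k * m)" by (simp add: power_mult)
  also have "d * k * m = n * k" using dm by (metis mult.commute mult.assoc)
  finally have "c ^ m = (w ^ n) ^ k" by (simp add: power_mult)
  thus ?thesis using w_n by simp
qed

lemma C_pow: "c \<in> C \<Longrightarrow> c ^ k \<in> C"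
  by (induction k) (auto simp: one_C C_mult)

lemma C_inverse: "c \<in> C \<Longrightarrow> inverse c \<in> C"
proof -
  assume c: "c \<in> C"
  have "inverse c = c ^ (m - 1)"
  proof -
    have "c * c ^ (m - 1) = c ^ m" using m_pos by (cases m) simp_all
    hence "c * c ^ (m - 1) = 1" using C_pow_m[OF c] by simp
    thus ?thesis by (rule inverse_unique)
  qed
  thus ?thesis using C_pow c by simp
qed

lemma C_powi: "c \<in> C \<Longrightarrow> c powi s \<in> C"
  by (cases "s \<ge> 0") (auto simp: power_int_def C_pow C_inverse)

lemma C_divide: "a \<in> C \<Longrightarrow> b \<in> C \<Longrightarrow> a / b \<in> C"
  by (simp add: divide_inverse C_mult C_inverse)

lemma C_powi_mod: "c \<in> C \<Longrightarrow> c powi s = c powi (s mod int m)"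
proof -
  assume c: "c \<in> C"
  have e1: "c powi s = c powi (int m * (s div int m)) * c powi (s mod int m)"
    using C_nz[OF c] power_int_add[of c "int m * (s div int m)" "s mod int m"] by simp
  have e2: "c powi (int m * (s div int m)) = (c powi int m) powi (s div int m)"
    by (rule power_int_mult)
  have "c powi int m = 1" using C_pow_m[OF c] by simp
  with e1 e2 show ?thesis by simp
qed

lemma C_powi_cong: "c \<in> C \<Longrightarrow> s mod int m = t mod int m \<Longrightarrow> c powi s = c powi t"
  by (metis C_powi_mod)

lemma gen_C: "w ^ d \<in> C" using wpow_C_iff by simp

lemma gen_powi: "(w ^ d) powi s = 1 \<Longrightarrow> s mod int m = 0"
proof -
  assume h: "(w ^ d) powi s = 1"
  have "(w ^ d) powi s = (w ^ d) powi (s mod int m)" using C_powi_mod[OF gen_C] .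
  also have "\<dots> = w ^ (d * nat (s mod int m))"
    using m_pos by (simp add: power_int_def power_mult)
  finally have "w ^ (d * nat (s mod int m)) = w ^ 0" using h by simp
  hence "(d * nat (s mod int m)) mod n = 0 mod n" using pow_eq_iff[of "d * nat (s mod int m)" 0] by blast
  hence "(d * nat (s mod int m)) mod n = 0" by simp
  moreover have "nat (s mod int m) < m" using m_pos by (simp add: nat_less_iff)
  hence "d * nat (s mod int m) < d * m" using d_pos by simp
  hence "d * nat (s mod int m) < n" using dm by simp
  ultimately have "d * nat (s mod int m) = 0" by simp
  hence "nat (s mod int m) = 0" using d_pos by simp
  moreover have "s mod int m \<ge> 0" using m_pos by simp
  ultimately show ?thesis by linarith
qed

lemma gen_powi_eq: "(w ^ d) powi s = (w ^ d) powi t \<Longrightarrow> s mod int m = t mod int m"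
proof -
  assume "(w ^ d) powi s = (w ^ d) powi t"
  moreover have "(w ^ d) powi (s - t) = (w ^ d) powi s / (w ^ d) powi t"
    by (rule power_int_diff) simp
  ultimately have "(w ^ d) powi (s - t) = 1" by simp
  hence "(s - t) mod int m = 0" by (rule gen_powi)
  thus ?thesis by (simp add: mod_eq_dvd_iff dvd_eq_mod_eq_0)
qed

end

context cycs begin

lemma coset_iff: "x \<in> cyc_coset w d i \<longleftrightarrow> (\<exists>c\<in>C. x = c * w ^ i)"
  by (auto simp: cyc_coset_def C_def mult.commute)

lemma coset_unique:
  assumes "c \<in> C" "c' \<in> C" "i < d" "j < d" "c * w ^ i = c' * w ^ j"
  shows "i = j"
proof -
  obtain k l where kl: "c = w ^ (d * k)" "c' = w ^ (d * l)" using assms(1,2) C_iff by blast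
  hence "w ^ (d * k + i) = w ^ (d * l + j)" using assms(5) by (simp add: power_add)
  hence "(d * k + i) mod n = (d * l + j) mod n" using pow_eq_iff by blast
  hence "(d * k + i) mod n mod d = (d * l + j) mod n mod d" by simp
  hence "(d * k + i) mod d = (d * l + j) mod d" by (simp only: mod_mod_cancel[OF dvd_dn])
  hence "i mod d = j mod d" by simp
  thus ?thesis using assms(3,4) by simp
qed

lemma coset_unique2:
  assumes "c \<in> C" "c' \<in> C" "i < d" "j < d" "c * w ^ i = c' * w ^ j"
  shows "i = j \<and> c = c'"
  using coset_unique[OF assms] assms(5) by simp

lemma decomp: "x \<noteq> 0 \<Longrightarrow> \<exists>c\<in>C. \<exists>i<d. x = c * w ^ i"
proof -
  assume "x \<noteq> 0"
  then obtain k where k: "x = w ^ k" using nz_pow by blast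
  have "k = d * (k div d) + k mod d" by simp
  hence "x = w ^ (d * (k div d)) * w ^ (k mod d)" using k by (metis power_add)
  moreover have "w ^ (d * (k div d)) \<in> C" using C_iff by blast
  moreover have "k mod d < d" using d_pos by simp
  ultimately show ?thesis by blast
qed

lemma beta_C_nz: "c \<in> C \<Longrightarrow> c * w ^ i \<noteq> 0" using C_nz by simp

lemma cidx_eq: "c \<in> C \<Longrightarrow> i < d \<Longrightarrow> cidx w d (c * w ^ i) = i"
  unfolding cidx_def
proof (rule the_equality)
  assume "c \<in> C" "i < d"
  thus "i < d \<and> c * w ^ i \<in> cyc_coset w d i" using coset_iff by blast
next
  fix j assume "c \<in> C" "i < d" "j < d \<and> c * w ^ i \<in> cyc_coset w d j"
  then obtain c' where "c' \<in> C" "c * w ^ i = c' * w ^ j" "j < d" using coset_iff by blast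
  thus "j = i" using coset_unique \<open>c \<in> C\<close> \<open>i < d\<close> by metis
qed

lemma beta_bij: "bij_betw (beta w) (C \<times> {..<d}) (UNIV - {0})"
  unfolding bij_betw_def
proof
  show "inj_on (beta w) (C \<times> {..<d})"
  proof (rule inj_onI)
    fix x y assume xy: "x \<in> C \<times> {..<d}" "y \<in> C \<times> {..<d}" "beta w x = beta w y"
    obtain c i c' j where "x = (c, i)" "y = (c', j)" by (cases x, cases y) blast
    with xy show "x = y" using coset_unique2[of c c' i j] by simp
  qed
  show "beta w ` (C \<times> {..<d}) = UNIV - {0}"
  proof
    show "beta w ` (C \<times> {..<d}) \<subseteq> UNIV - {0}" using beta_C_nz by auto
    show "UNIV - {0} \<subseteq> beta w ` (C \<times> {..<d})"
    proof
      fix x assume "x \<in> UNIV - {0::'a}"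
      then obtain c i where "c \<in> C" "i < d" "x = c * w ^ i" using decomp by blast
      thus "x \<in> beta w ` (C \<times> {..<d})" by (auto intro!: image_eqI[of _ _ "(c, i)"])
    qed
  qed
qed

lemma fun_eqE:
  assumes "f 0 = 0" "g 0 = 0" "\<And>c i. c \<in> C \<Longrightarrow> i < d \<Longrightarrow> f (c * w ^ i) = g (c * w ^ i)"
  shows "f = g"
proof
  fix x show "f x = g x"
  proof (cases "x = 0")
    case True thus ?thesis using assms by simp
  next
    case False
    then obtain c i where "c \<in> C" "i < d" "x = c * w ^ i" using decomp by blast
    thus ?thesis using assms(3) by simp
  qed
qed

lemma gcm_0[simp]: "gen_cyc_map w d a r 0 = 0" by (simp add: gen_cyc_map_def)

lemma gcm_val: "c \<in> C \<Longrightarrow> i < d \<Longrightarrow> gen_cyc_map w d a r (c * w ^ i) = a i * (c * w ^ i) ^ r i"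
  using beta_C_nz by (simp add: gen_cyc_map_def cidx_eq)

lemma card_coset: "card (cyc_coset w d i) = card C"
  unfolding cyc_coset_def C_def[symmetric]
  by (rule card_image) (auto intro: inj_onI)

lemma coset_mult: "y \<in> cyc_coset w d k \<Longrightarrow> c \<in> C \<Longrightarrow> y * c \<in> cyc_coset w d k"
proof -
  assume "y \<in> cyc_coset w d k" "c \<in> C"
  then obtain c' where c': "c' \<in> C" "y = c' * w ^ k" unfolding coset_iff by blast
  hence "y * c = (c' * c) * w ^ k" by (simp add: ac_simps)
  moreover have "c' * c \<in> C" using c' \<open>c \<in> C\<close> C_mult by blast
  ultimately show ?thesis unfolding coset_iff by blast
qed

lemma nz_coset: "x \<noteq> 0 \<Longrightarrow> x \<in> cyc_coset w d (cidx w d x) \<and> cidx w d x < d"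
proof -
  assume "x \<noteq> 0"
  then obtain c i where "c \<in> C" "i < d" "x = c * w ^ i" using decomp by blast
  thus ?thesis using cidx_eq coset_iff by auto
qed

lemma coset_cidx: "x \<in> cyc_coset w d i \<Longrightarrow> i < d \<Longrightarrow> cidx w d x = i"
  unfolding coset_iff using cidx_eq by auto

lemma coset_nz: "x \<in> cyc_coset w d i \<Longrightarrow> x \<noteq> 0"
  unfolding coset_iff using beta_C_nz by auto

lemma coset_inj: "i < d \<Longrightarrow> j < d \<Longrightarrow> cyc_coset w d i = cyc_coset w d j \<Longrightarrow> i = j"
proof -
  assume a: "i < d" "j < d" "cyc_coset w d i = cyc_coset w d j"
  have "1 * w ^ i \<in> cyc_coset w d i" using coset_iff one_C by blast
  hence "w ^ i \<in> cyc_coset w d j" using a by simp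
  hence "cidx w d (w ^ i) = j" using coset_cidx a by blast
  moreover have "cidx w d (1 * w ^ i) = i" using cidx_eq one_C a by blast
  ultimately show ?thesis by simp
qed

lemma hol_in: "c \<in> C \<Longrightarrow> hol_map C s b c = b * c powi s" by (simp add: hol_map_def)
lemma hol_out: "c \<notin> C \<Longrightarrow> hol_map C s b c = c" by (simp add: hol_map_def)

lemma hol_C: "b \<in> C \<Longrightarrow> c \<in> C \<Longrightarrow> hol_map C s b c \<in> C"
  by (simp add: hol_in C_mult C_powi)

lemma hol_comp:
  assumes "b \<in> C" "b' \<in> C"
  shows "hol_map C s b \<circ> hol_map C t b' = hol_map C (t * s) (b * b' powi s)"
proof
  fix x show "(hol_map C s b \<circ> hol_map C t b') x = hol_map C (t * s) (b * b' powi s) x"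
  proof (cases "x \<in> C")
    case True
    hence "hol_map C t b' x \<in> C" using hol_C assms by blast
    hence "(hol_map C s b \<circ> hol_map C t b') x = b * (b' * x powi t) powi s"
      using True by (simp add: hol_in)
    also have "\<dots> = b * b' powi s * x powi (t * s)"
      by (simp only: power_int_mult_distrib power_int_mult[symmetric] mult.assoc)
    finally show ?thesis using True by (simp add: hol_in)
  next
    case False thus ?thesis by (simp add: hol_out)
  qed
qed

lemma hol_id: "hol_map C 1 1 = id"
  by (auto simp: hol_map_def)

lemma hol_cong: "s mod int m = t mod int m \<Longrightarrow> hol_map C s b = hol_map C t b"
proof
  fix x assume st: "s mod int m = t mod int m"
  show "hol_map C s b x = hol_map C t b x"
  proof (cases "x \<in> C")
    case True thus ?thesis using C_powi_cong[OF True st] by (simp add: hol_in)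
  qed (simp add: hol_out)
qed

lemma hol_inj:
  assumes "b \<in> C" "b' \<in> C" "hol_map C s b = hol_map C t b'"
  shows "b = b' \<and> s mod int m = t mod int m"
proof -
  have "hol_map C s b 1 = hol_map C t b' 1" using assms by simp
  hence bb: "b = b'" using one_C by (simp add: hol_in)
  have "hol_map C s b (w ^ d) = hol_map C t b' (w ^ d)" using assms by simp
  hence "b * (w ^ d) powi s = b * (w ^ d) powi t" using gen_C bb by (simp add: hol_in)
  hence "(w ^ d) powi s = (w ^ d) powi t" using C_nz[OF assms(1)] by simp
  thus ?thesis using bb gen_powi_eq by blast
qed

lemma Hol_iff: "f \<in> Hol C m \<longleftrightarrow> (\<exists>s b. b \<in> C \<and> coprime s (int m) \<and> f = hol_map C s b)"
  unfolding Hol_def by blast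

lemma Hol_C: "f \<in> Hol C m \<Longrightarrow> c \<in> C \<Longrightarrow> f c \<in> C"
  unfolding Hol_iff using hol_C by blast

lemma Hol_out: "f \<in> Hol C m \<Longrightarrow> c \<notin> C \<Longrightarrow> f c = c"
  unfolding Hol_iff using hol_out by blast

lemma Hol_comp: "f \<in> Hol C m \<Longrightarrow> g \<in> Hol C m \<Longrightarrow> f \<circ> g \<in> Hol C m"
proof -
  assume "f \<in> Hol C m" "g \<in> Hol C m"
  then obtain s b t b' where sb: "b \<in> C" "coprime s (int m)" "f = hol_map C s b"
    and tb: "b' \<in> C" "coprime t (int m)" "g = hol_map C t b'" unfolding Hol_iff by blast
  hence "f \<circ> g = hol_map C (t * s) (b * b' powi s)" using hol_comp by blast
  moreover have "b * b' powi s \<in> C" using sb tb C_mult C_powi by blast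
  moreover have "coprime (t * s) (int m)" using sb tb by simp
  ultimately show ?thesis unfolding Hol_iff by blast
qed

lemma Hol_id: "id \<in> Hol C m"
  unfolding Hol_iff using hol_id one_C by (intro exI[of _ 1] exI[of _ 1]) auto

lemma Hol_inv: "f \<in> Hol C m \<Longrightarrow> \<exists>g \<in> Hol C m. f \<circ> g = id"
proof -
  assume "f \<in> Hol C m"
  then obtain s b where sb: "b \<in> C" "coprime s (int m)" "f = hol_map C s b" unfolding Hol_iff by blast
  then obtain t where t: "[s * t = 1] (mod int m)" using cong_solve_coprime_int by blast
  have ct: "coprime t (int m)" using t coprime_iff_invertible_int[of t "int m"]
    by (metis mult.commute)
  let ?b' = "b powi (- t)"
  have b'C: "?b' \<in> C" using sb C_powi by blast
  have "f \<circ> hol_map C t ?b' = hol_map C (t * s) (b * ?b' powi s)" using hol_comp sb b'C by blast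
  also have "b * ?b' powi s = b powi (1 - t * s)"
  proof -
    have "?b' powi s = b powi (- t * s)" using power_int_mult[of b "-t" s] by simp
    hence "b * ?b' powi s = b powi 1 * b powi (- t * s)" by simp
    also have "\<dots> = b powi (1 - t * s)"
      using C_nz[OF sb(1)] by (simp add: power_int_diff power_int_minus divide_inverse)
    finally show ?thesis .
  qed
  also have "\<dots> = 1"
  proof -
    have "int m dvd (s * t - 1)" using t by (simp add: cong_def mod_eq_dvd_iff)
    hence "int m dvd - (s * t - 1)" by (simp only: dvd_minus_iff)
    hence "int m dvd (1 - t * s)" by (simp add: mult.commute)
    hence "(1 - t * s) mod int m = 0 mod int m" by simp
    hence "b powi (1 - t * s) = b powi 0" using C_powi_cong sb(1) by blast
    thus ?thesis by simp
  qed
  also have "hol_map C (t * s) 1 = hol_map C 1 1"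
    using t by (intro hol_cong) (simp add: cong_def mult.commute)
  finally have "f \<circ> hol_map C t ?b' = hol_map C 1 1" .
  hence "f \<circ> hol_map C t ?b' = id" using hol_id by simp
  moreover have "hol_map C t ?b' \<in> Hol C m" using b'C ct unfolding Hol_iff by blast
  ultimately show ?thesis by blast
qed

lemma hol_param_spec:
  assumes "f \<in> Hol C m"
  shows "fst (hol_param C m f) \<in> {1..m} \<and> snd (hol_param C m f) \<in> C
     \<and> f = hol_map C (int (fst (hol_param C m f))) (snd (hol_param C m f))"
proof -
  obtain s b where sb: "b \<in> C" "coprime s (int m)" "f = hol_map C s b" using assms unfolding Hol_iff by blast
  define s1 where "s1 = (if s mod int m = 0 then m else nat (s mod int m))"
  have s1: "s1 \<in> {1..m}"
  proof (cases "s mod int m = 0")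
    case False
    moreover have "0 \<le> s mod int m" "s mod int m < int m" using m_pos by simp_all
    ultimately show ?thesis unfolding s1_def by auto
  qed (use m_pos in \<open>auto simp: s1_def\<close>)
  have "int s1 mod int m = s mod int m" using m_pos unfolding s1_def by auto
  hence "hol_map C s b = hol_map C (int s1) b" by (intro hol_cong) simp
  hence "f = hol_map C (int s1) b" using sb by simp
  hence ex: "\<exists>p. (case p of (s, b) \<Rightarrow> s \<in> {1..m} \<and> b \<in> C \<and> f = hol_map C (int s) b)"
    using s1 sb by blast
  have "case hol_param C m f of (s, b) \<Rightarrow> s \<in> {1..m} \<and> b \<in> C \<and> f = hol_map C (int s) b"
    unfolding hol_param_def by (rule someI_ex[OF ex])
  thus ?thesis by (simp add: case_prod_beta)
qed

lemma hol_param_unique: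
  assumes "f \<in> Hol C m" "f = hol_map C s b" "b \<in> C"
  shows "int (fst (hol_param C m f)) mod int m = s mod int m \<and> snd (hol_param C m f) = b"
proof -
  have sp: "fst (hol_param C m f) \<in> {1..m}" "snd (hol_param C m f) \<in> C"
     "f = hol_map C (int (fst (hol_param C m f))) (snd (hol_param C m f))"
    using hol_param_spec[OF assms(1)] by auto
  have "hol_map C (int (fst (hol_param C m f))) (snd (hol_param C m f)) = hol_map C s b"
    using sp(3) assms(2) by simp
  from hol_inj[OF sp(2) assms(3) this] show ?thesis by simp
qed

end

lemma wrc_iff: "(\<sigma>, g) \<in> wr_carrier G d \<longleftrightarrow> \<sigma> permutes {..<d} \<and> (\<forall>i<d. g i \<in> G) \<and> (\<forall>i. d \<le> i \<longrightarrow> g i = id)"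
  by (simp add: wr_carrier_def)

lemma perm_lt: "\<sigma> permutes {..<d} \<Longrightarrow> i < d \<Longrightarrow> \<sigma> i < d"
  using permutes_in_image[of \<sigma> "{..<d}" i] by simp

lemma perm_inv_lt:
  assumes "\<tau> permutes {..<(d::nat)}" "j < d"
  shows "inv_into {..<d} \<tau> j < d \<and> \<tau> (inv_into {..<d} \<tau> j) = j"
proof -
  have b: "bij_betw \<tau> {..<d} {..<d}" using assms(1) by (rule permutes_imp_bij)
  have "inv_into {..<d} \<tau> j \<in> {..<d}"
    using bij_betw_inv_into[OF b] assms(2) by (auto dest: bij_betwE)
  moreover have "\<tau> (inv_into {..<d} \<tau> j) = j" using bij_betw_inv_into_right[OF b] assms(2) by simp
  ultimately show ?thesis by simp
qed

lemma perm_inv_left: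
  assumes "\<tau> permutes {..<(d::nat)}" "i < d"
  shows "inv_into {..<d} \<tau> (\<tau> i) = i"
  using bij_betw_inv_into_left[OF permutes_imp_bij[OF assms(1)]] assms(2) by simp

lemma wr_mult_closed:
  assumes cl: "\<And>f g. f \<in> G \<Longrightarrow> g \<in> G \<Longrightarrow> f \<circ> g \<in> G"
    and x: "x \<in> wr_carrier G d" and y: "y \<in> wr_carrier G d"
  shows "wr_mult d x y \<in> wr_carrier G d"
proof -
  obtain \<sigma> g \<tau> h where xy: "x = (\<sigma>, g)" "y = (\<tau>, h)" by (cases x, cases y) blast
  have s: "\<sigma> permutes {..<d}" "\<forall>i<d. g i \<in> G" and t: "\<tau> permutes {..<d}" "\<forall>i<d. h i \<in> G"
    using x y xy by (auto simp: wrc_iff)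
  have "\<tau> \<circ> \<sigma> permutes {..<d}" by (rule permutes_compose[OF s(1) t(1)])
  moreover have "h j \<circ> g (inv_into {..<d} \<tau> j) \<in> G" if j: "j < d" for j
  proof -
    have "inv_into {..<d} \<tau> j < d" using perm_inv_lt[OF t(1) j] by blast
    hence "g (inv_into {..<d} \<tau> j) \<in> G" using s(2) by blast
    moreover have "h j \<in> G" using t(2) j by blast
    ultimately show ?thesis using cl by blast
  qed
  ultimately show ?thesis using xy by (simp add: wrc_iff)
qed

lemma wr_inv:
  assumes x: "(\<sigma>, g) \<in> wr_carrier G d" and gi: "\<And>j. j < d \<Longrightarrow> gi j \<in> G \<and> g j \<circ> gi j = id"
  shows "(Hilbert_Choice.inv \<sigma>, \<lambda>k. if k < d then gi (\<sigma> k) else id) \<in> wr_carrier G d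
    \<and> wr_mult d (Hilbert_Choice.inv \<sigma>, \<lambda>k. if k < d then gi (\<sigma> k) else id) (\<sigma>, g) = (id, \<lambda>_. id)"
proof -
  have s: "\<sigma> permutes {..<d}" using x by (simp add: wrc_iff)
  have c: "(Hilbert_Choice.inv \<sigma>, \<lambda>k. if k < d then gi (\<sigma> k) else id) \<in> wr_carrier G d"
    using permutes_inv[OF s] gi perm_lt[OF s] by (simp add: wrc_iff)
  have "\<sigma> \<circ> Hilbert_Choice.inv \<sigma> = id" using permutes_inv_o(1)[OF s] .
  moreover have "(\<lambda>j. if j < d then g j \<circ> (if inv_into {..<d} \<sigma> j < d then gi (\<sigma> (inv_into {..<d} \<sigma> j)) else id) else id) = (\<lambda>_. id)"
  proof
    fix j show "(if j < d then g j \<circ> (if inv_into {..<d} \<sigma> j < d then gi (\<sigma> (inv_into {..<d} \<sigma> j)) else id) else id) = id"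
      using perm_inv_lt[OF s, of j] gi[of j] by auto
  qed
  ultimately show ?thesis using c by simp
qed

declare iota.simps[simp del]

context cycs begin

lemma iota_unf: "iota w d (\<psi>, g) = gen_cyc_map w d
   (\<lambda>i. w powi (int (\<psi> i) - int i * int (fst (hol_param C m (g (\<psi> i))))) * snd (hol_param C m (g (\<psi> i))))
   (\<lambda>i. fst (hol_param C m (g (\<psi> i))))"
  by (simp add: iota.simps C_def m_def n_def Let_def)

lemma iota_0[simp]: "iota w d x 0 = 0"
  by (cases x) (simp add: iota_unf)

lemma iota_val:
  assumes x: "(\<psi>, g) \<in> wr_carrier (Hol C m) d" and c: "c \<in> C" and i: "i < d"
  shows "iota w d (\<psi>, g) (c * w ^ i) = g (\<psi> i) c * w ^ (\<psi> i)"
proof -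
  have ps: "\<psi> permutes {..<d}" using x by (simp add: wrc_iff)
  hence pi: "\<psi> i < d" using perm_lt i by blast
  hence gH: "g (\<psi> i) \<in> Hol C m" using x by (simp add: wrc_iff)
  obtain s b where sb: "hol_param C m (g (\<psi> i)) = (s, b)" by (cases "hol_param C m (g (\<psi> i))") blast
  have spec: "b \<in> C" "g (\<psi> i) = hol_map C (int s) b" using hol_param_spec[OF gH] sb by auto
  have "iota w d (\<psi>, g) (c * w ^ i) = (w powi (int (\<psi> i) - int i * int s) * b) * (c * w ^ i) ^ s"
    unfolding iota_unf using gcm_val[OF c i] sb by simp
  also have "(c * w ^ i) ^ s = c ^ s * w ^ (i * s)" by (simp add: power_mult_distrib power_mult)
  also have "(w powi (int (\<psi> i) - int i * int s) * b) * (c ^ s * w ^ (i * s))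
     = b * c ^ s * (w powi (int (\<psi> i) - int i * int s) * w powi (int (i * s)))"
    by (simp only: mult_ac power_int_of_nat)
  also have "w powi (int (\<psi> i) - int i * int s) * w powi (int (i * s)) = w powi (int (\<psi> i))"
    using power_int_add[of w "int (\<psi> i) - int i * int s" "int (i * s)"] by simp
  also have "g (\<psi> i) c = b * c ^ s" using spec c by (simp add: hol_in)
  ultimately show ?thesis by simp
qed

lemma Hol_closed: "f \<in> Hol C m \<Longrightarrow> g \<in> Hol C m \<Longrightarrow> f \<circ> g \<in> Hol C m"
  by (rule Hol_comp)

lemma iota_mult:
  assumes x: "x \<in> wr_carrier (Hol C m) d" and y: "y \<in> wr_carrier (Hol C m) d"
  shows "iota w d (wr_mult d x y) = iota w d y \<circ> iota w d x"
proof -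
  obtain \<sigma> g \<tau> h where xy: "x = (\<sigma>, g)" "y = (\<tau>, h)" by (cases x, cases y) blast
  have s: "\<sigma> permutes {..<d}" "\<forall>i<d. g i \<in> Hol C m" and t: "\<tau> permutes {..<d}"
    using x y xy by (auto simp: wrc_iff)
  have xyc: "wr_mult d x y \<in> wr_carrier (Hol C m) d" using wr_mult_closed[OF Hol_closed x y] .
  show ?thesis
  proof (rule fun_eqE)
    fix c i assume c: "c \<in> C" and i: "i < d"
    have si: "\<sigma> i < d" using perm_lt[OF s(1) i] .
    have tsi: "\<tau> (\<sigma> i) < d" using perm_lt[OF t si] .
    have gc: "g (\<sigma> i) c \<in> C" using Hol_C s(2) si c by blast
    define k where "k = (\<lambda>j. if j < d then h j \<circ> g (inv_into {..<d} \<tau> j) else id)"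
    have wm: "wr_mult d x y = (\<tau> \<circ> \<sigma>, k)" unfolding xy k_def by simp
    have kc: "(\<tau> \<circ> \<sigma>, k) \<in> wr_carrier (Hol C m) d" using xyc wm by simp
    have kv: "k (\<tau> (\<sigma> i)) = h (\<tau> (\<sigma> i)) \<circ> g (\<sigma> i)"
      unfolding k_def using tsi perm_inv_left[OF t si] by simp
    have ix: "iota w d x (c * w ^ i) = g (\<sigma> i) c * w ^ (\<sigma> i)"
      unfolding xy by (rule iota_val[OF x[unfolded xy] c i])
    have iy: "iota w d y (g (\<sigma> i) c * w ^ (\<sigma> i)) = h (\<tau> (\<sigma> i)) (g (\<sigma> i) c) * w ^ (\<tau> (\<sigma> i))"
      unfolding xy by (rule iota_val[OF y[unfolded xy] gc si])
    have "iota w d (wr_mult d x y) (c * w ^ i) = k ((\<tau> \<circ> \<sigma>) i) c * w ^ ((\<tau> \<circ> \<sigma>) i)"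
      unfolding wm by (rule iota_val[OF kc c i])
    also have "\<dots> = h (\<tau> (\<sigma> i)) (g (\<sigma> i) c) * w ^ (\<tau> (\<sigma> i))" using kv by simp
    also have "\<dots> = iota w d y (iota w d x (c * w ^ i))" unfolding ix iy ..
    finally show "iota w d (wr_mult d x y) (c * w ^ i) = (iota w d y \<circ> iota w d x) (c * w ^ i)" by simp
  qed simp_all
qed

lemma iota_inj:
  assumes x: "x \<in> wr_carrier (Hol C m) d" and y: "y \<in> wr_carrier (Hol C m) d"
    and e: "iota w d x = iota w d y"
  shows "x = y"
proof -
  obtain \<sigma> g \<tau> h where xy: "x = (\<sigma>, g)" "y = (\<tau>, h)" by (cases x, cases y) blast
  have s: "\<sigma> permutes {..<d}" "\<forall>i<d. g i \<in> Hol C m" "\<forall>i. d \<le> i \<longrightarrow> g i = id"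
    and t: "\<tau> permutes {..<d}" "\<forall>i<d. h i \<in> Hol C m" "\<forall>i. d \<le> i \<longrightarrow> h i = id"
    using x y xy by (auto simp: wrc_iff)
  have key: "\<sigma> i = \<tau> i \<and> g (\<sigma> i) c = h (\<tau> i) c" if c: "c \<in> C" and i: "i < d" for c i
  proof -
    have e': "iota w d (\<sigma>, g) = iota w d (\<tau>, h)" using e unfolding xy .
    have "g (\<sigma> i) c * w ^ (\<sigma> i) = iota w d (\<sigma>, g) (c * w ^ i)"
      by (rule sym, rule iota_val[OF x[unfolded xy] c i])
    also have "\<dots> = iota w d (\<tau>, h) (c * w ^ i)" unfolding e' ..
    also have "\<dots> = h (\<tau> i) c * w ^ (\<tau> i)" by (rule iota_val[OF y[unfolded xy] c i])
    finally have "g (\<sigma> i) c * w ^ (\<sigma> i) = h (\<tau> i) c * w ^ (\<tau> i)" .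
    moreover have "g (\<sigma> i) c \<in> C" "h (\<tau> i) c \<in> C" "\<sigma> i < d" "\<tau> i < d"
      using Hol_C s t perm_lt c i by blast+
    ultimately show ?thesis using coset_unique2 by blast
  qed
  have st: "\<sigma> = \<tau>"
  proof
    fix i show "\<sigma> i = \<tau> i"
    proof (cases "i < d")
      case True thus ?thesis using key[OF one_C] by blast
    next
      case False thus ?thesis using permutes_not_in[OF s(1)] permutes_not_in[OF t(1)] by simp
    qed
  qed
  have "g = h"
  proof
    fix j show "g j = h j"
    proof (cases "j < d")
      case True
      obtain i where i: "i < d" "\<sigma> i = j" using perm_inv_lt[OF s(1) True] by blast
      show ?thesis
      proof
        fix c show "g j c = h j c"
        proof (cases "c \<in> C")
          case True thus ?thesis using key[OF True i(1)] i st by simp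
        next
          case False
          have "g j \<in> Hol C m" "h j \<in> Hol C m" using s(2) t(2) \<open>j < d\<close> by blast+
          hence "g j c = c" "h j c = c" using Hol_out False by blast+
          thus ?thesis by simp
        qed
      qed
    next
      case False thus ?thesis using s(3) t(3) by simp
    qed
  qed
  thus ?thesis using st xy by simp
qed

lemma one_carrier: "(id, \<lambda>_. id) \<in> wr_carrier (Hol C m) d"
  using Hol_id by (simp add: wrc_iff)

lemma wr_closed: "x \<in> wr_carrier (Hol C m) d \<Longrightarrow> y \<in> wr_carrier (Hol C m) d \<Longrightarrow> wr_mult d x y \<in> wr_carrier (Hol C m) d"
  by (rule wr_mult_closed[OF Hol_closed])

lemma wr_assoc:
  assumes c: "x \<in> wr_carrier (Hol C m) d" "y \<in> wr_carrier (Hol C m) d" "z \<in> wr_carrier (Hol C m) d"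
  shows "wr_mult d (wr_mult d x y) z = wr_mult d x (wr_mult d y z)"
proof -
  have xy: "wr_mult d x y \<in> wr_carrier (Hol C m) d" using wr_closed c by blast
  have yz: "wr_mult d y z \<in> wr_carrier (Hol C m) d" using wr_closed c by blast
  have a1: "wr_mult d (wr_mult d x y) z \<in> wr_carrier (Hol C m) d" using wr_closed xy c by blast
  have a2: "wr_mult d x (wr_mult d y z) \<in> wr_carrier (Hol C m) d" using wr_closed yz c by blast
  have "iota w d (wr_mult d (wr_mult d x y) z) = iota w d z \<circ> (iota w d y \<circ> iota w d x)"
    unfolding iota_mult[OF xy c(3)] iota_mult[OF c(1) c(2)] ..
  also have "\<dots> = (iota w d z \<circ> iota w d y) \<circ> iota w d x" by (rule o_assoc)
  also have "\<dots> = iota w d (wr_mult d x (wr_mult d y z))"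
    unfolding iota_mult[OF c(1) yz] iota_mult[OF c(2) c(3)] ..
  finally show ?thesis by (rule iota_inj[OF a1 a2])
qed

lemma wr_lone: "x \<in> wr_carrier (Hol C m) d \<Longrightarrow> wr_mult d (id, \<lambda>_. id) x = x"
proof -
  assume x: "x \<in> wr_carrier (Hol C m) d"
  obtain \<sigma> g where xx: "x = (\<sigma>, g)" by (cases x) blast
  hence "\<forall>i. d \<le> i \<longrightarrow> g i = id" using x by (simp add: wrc_iff)
  hence "(\<lambda>j. if j < d then g j \<circ> id else id) = g" by (auto intro!: ext)
  thus ?thesis unfolding xx by simp
qed

lemma wr_linv: "x \<in> wr_carrier (Hol C m) d \<Longrightarrow> \<exists>y\<in>wr_carrier (Hol C m) d. wr_mult d y x = (id, \<lambda>_. id)"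
proof -
  assume x0: "x \<in> wr_carrier (Hol C m) d"
  obtain \<sigma> g where xx: "x = (\<sigma>, g)" by (cases x) blast
  have x: "(\<sigma>, g) \<in> wr_carrier (Hol C m) d" using x0 xx by simp
  have gH: "\<forall>j<d. g j \<in> Hol C m" using x by (simp add: wrc_iff)
  define gi where "gi j = (SOME f. f \<in> Hol C m \<and> g j \<circ> f = id)" for j
  have "gi j \<in> Hol C m \<and> g j \<circ> gi j = id" if "j < d" for j
  proof -
    have "\<exists>f. f \<in> Hol C m \<and> g j \<circ> f = id" using Hol_inv gH that by blast
    thus ?thesis unfolding gi_def by (rule someI_ex)
  qed
  from wr_inv[OF x, of gi, OF this]
  show ?thesis unfolding xx by blast
qed

lemma wr_group_group: "group (wr_group (Hol C m) d)"
proof (rule groupI)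
  show "\<And>x y. x \<in> carrier (wr_group (Hol C m) d) \<Longrightarrow> y \<in> carrier (wr_group (Hol C m) d) \<Longrightarrow>
     x \<otimes>\<^bsub>wr_group (Hol C m) d\<^esub> y \<in> carrier (wr_group (Hol C m) d)"
    unfolding wr_group_def by (simp add: wr_closed)
  show "\<one>\<^bsub>wr_group (Hol C m) d\<^esub> \<in> carrier (wr_group (Hol C m) d)"
    unfolding wr_group_def by (simp add: one_carrier)
  show "\<And>x y z. x \<in> carrier (wr_group (Hol C m) d) \<Longrightarrow> y \<in> carrier (wr_group (Hol C m) d) \<Longrightarrow>
     z \<in> carrier (wr_group (Hol C m) d) \<Longrightarrow>
     x \<otimes>\<^bsub>wr_group (Hol C m) d\<^esub> y \<otimes>\<^bsub>wr_group (Hol C m) d\<^esub> z =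
     x \<otimes>\<^bsub>wr_group (Hol C m) d\<^esub> (y \<otimes>\<^bsub>wr_group (Hol C m) d\<^esub> z)"
    unfolding wr_group_def by (simp add: wr_assoc)
  show "\<And>x. x \<in> carrier (wr_group (Hol C m) d) \<Longrightarrow> \<one>\<^bsub>wr_group (Hol C m) d\<^esub> \<otimes>\<^bsub>wr_group (Hol C m) d\<^esub> x = x"
    unfolding wr_group_def by (simp add: wr_lone)
  show "\<And>x. x \<in> carrier (wr_group (Hol C m) d) \<Longrightarrow>
      \<exists>y\<in>carrier (wr_group (Hol C m) d). y \<otimes>\<^bsub>wr_group (Hol C m) d\<^esub> x = \<one>\<^bsub>wr_group (Hol C m) d\<^esub>"
    unfolding wr_group_def using wr_linv by simp
qed

lemma iota_one: "iota w d (id, \<lambda>_. id) = id"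
  by (rule fun_eqE) (simp_all only: iota_val[OF one_carrier] iota_0 id_apply)

lemma iota_bij:
  assumes x: "x \<in> wr_carrier (Hol C m) d"
  shows "bij (iota w d x)"
proof -
  interpret G: group "wr_group (Hol C m) d" by (rule wr_group_group)
  have xc: "x \<in> carrier (wr_group (Hol C m) d)" using x by (simp add: wr_group_def)
  then obtain y where y: "y \<in> carrier (wr_group (Hol C m) d)" "y \<otimes>\<^bsub>wr_group (Hol C m) d\<^esub> x = \<one>\<^bsub>wr_group (Hol C m) d\<^esub>"
    using G.l_inv_ex by blast
  have yc: "y \<in> wr_carrier (Hol C m) d" and e: "wr_mult d y x = (id, \<lambda>_. id)"
    using y by (simp_all add: wr_group_def)
  have "iota w d x \<circ> iota w d y = id" using iota_mult[OF yc x] e iota_one by simp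
  hence "iota w d x (iota w d y z) = z" for z
    using comp_apply[of "iota w d x" "iota w d y" z] by simp
  hence "surj (iota w d x)" by (rule surjI)
  thus ?thesis using finite_UNIV_surj_inj[of "iota w d x"] by (simp add: bij_def)
qed

lemma iota_GCP:
  assumes x: "x \<in> wr_carrier (Hol C m) d"
  shows "iota w d x \<in> GCP w d"
proof -
  obtain \<psi> g where xx: "x = (\<psi>, g)" by (cases x) blast
  have s: "\<psi> permutes {..<d}" "\<forall>i<d. g i \<in> Hol C m" using x xx by (auto simp: wrc_iff)
  have mm: "(card (UNIV :: 'a set) - 1) div d = m" using n_def m_def by simp
  have "fst (hol_param C m (g (\<psi> i))) \<in> {1..m}" if i: "i < d" for i
  proof -
    have "g (\<psi> i) \<in> Hol C m" using s perm_lt i by blast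
    thus ?thesis using hol_param_spec by blast
  qed
  hence r: "\<forall>i<d. fst (hol_param C m (g (\<psi> i))) \<in> {1..(card (UNIV :: 'a set) - 1) div d}"
    unfolding mm by blast
  have b: "bij (iota w d x)" using iota_bij[OF x] .
  define A where "A = (\<lambda>i. w powi (int (\<psi> i) - int i * int (fst (hol_param C m (g (\<psi> i))))) * snd (hol_param C m (g (\<psi> i))))"
  define R where "R = (\<lambda>i. fst (hol_param C m (g (\<psi> i))))"
  have ix: "iota w d x = gen_cyc_map w d A R" unfolding xx iota_unf A_def R_def ..
  have "\<exists>a r. gen_cyc_map w d A R = gen_cyc_map w d a r \<and> (\<forall>i<d. r i \<in> {1..(card (UNIV :: 'a set) - 1) div d}) \<and> bij (gen_cyc_map w d a r)"
    by (intro exI[of _ A] exI[of _ R]) (use r b ix R_def in simp)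
  thus ?thesis unfolding GCP_def ix by simp
qed

end

context cycs begin

lemma F_nz: "bij (gen_cyc_map w d a r) \<Longrightarrow> x \<noteq> 0 \<Longrightarrow> gen_cyc_map w d a r x \<noteq> 0"
proof
  assume b: "bij (gen_cyc_map w d a r)" and x: "x \<noteq> 0" and e: "gen_cyc_map w d a r x = 0"
  hence "gen_cyc_map w d a r x = gen_cyc_map w d a r 0" by simp
  hence "x = 0" using b unfolding bij_def inj_def by blast
  thus False using x by simp
qed

lemma F_val1:
  assumes c: "c \<in> C" and i: "i < d"
  shows "gen_cyc_map w d a r (c * w ^ i) = gen_cyc_map w d a r (w ^ i) * c ^ r i"
proof -
  have e1: "gen_cyc_map w d a r (w ^ i) = a i * (w ^ i) ^ r i"
    using gcm_val[OF one_C i, of a r] by simp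
  show ?thesis unfolding e1 gcm_val[OF c i] by (simp add: power_mult_distrib mult_ac)
qed

lemma F_img_sub:
  assumes b: "bij (gen_cyc_map w d a r)" and i: "i < d"
  shows "gen_cyc_map w d a r ` cyc_coset w d i \<subseteq> cyc_coset w d (cidx w d (gen_cyc_map w d a r (w ^ i)))"
proof
  fix y assume "y \<in> gen_cyc_map w d a r ` cyc_coset w d i"
  then obtain x where "x \<in> cyc_coset w d i" "y = gen_cyc_map w d a r x" by blast
  moreover obtain c where "c \<in> C" "x = c * w ^ i" using \<open>x \<in> cyc_coset w d i\<close> coset_iff by blast
  ultimately have c: "c \<in> C" "y = gen_cyc_map w d a r (c * w ^ i)" by simp_all
  have nz: "gen_cyc_map w d a r (w ^ i) \<noteq> 0" using F_nz[OF b] by simp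
  have "gen_cyc_map w d a r (w ^ i) \<in> cyc_coset w d (cidx w d (gen_cyc_map w d a r (w ^ i)))"
    using nz_coset[OF nz] by blast
  moreover have "y = gen_cyc_map w d a r (w ^ i) * c ^ r i" using c F_val1[OF c(1) i] by simp
  ultimately show "y \<in> cyc_coset w d (cidx w d (gen_cyc_map w d a r (w ^ i)))"
    using coset_mult C_pow c(1) by simp
qed

lemma fin_coset: "finite (cyc_coset w d i)" by simp

lemma F_img:
  assumes b: "bij (gen_cyc_map w d a r)" and i: "i < d"
  shows "gen_cyc_map w d a r ` cyc_coset w d i = cyc_coset w d (cidx w d (gen_cyc_map w d a r (w ^ i)))"
proof (rule card_subset_eq[OF fin_coset F_img_sub[OF b i]])
  have "inj_on (gen_cyc_map w d a r) (cyc_coset w d i)"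
    using b unfolding bij_def by (metis inj_on_subset subset_UNIV)
  hence "card (gen_cyc_map w d a r ` cyc_coset w d i) = card (cyc_coset w d i)" by (rule card_image)
  thus "card (gen_cyc_map w d a r ` cyc_coset w d i) = card (cyc_coset w d (cidx w d (gen_cyc_map w d a r (w ^ i))))"
    using card_coset by simp
qed

definition psiF where "psiF a r = (\<lambda>i. if i < d then cidx w d (gen_cyc_map w d a r (w ^ i)) else i)"

lemma psiF_img: "bij (gen_cyc_map w d a r) \<Longrightarrow> i < d \<Longrightarrow>
   gen_cyc_map w d a r ` cyc_coset w d i = cyc_coset w d (psiF a r i)"
  unfolding psiF_def using F_img by simp

lemma psiF_lt: "bij (gen_cyc_map w d a r) \<Longrightarrow> i < d \<Longrightarrow> psiF a r i < d"
  unfolding psiF_def using nz_coset F_nz by simp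

lemma psiF_perm:
  assumes b: "bij (gen_cyc_map w d a r)"
  shows "psiF a r permutes {..<d}"
proof (rule bij_imp_permutes)
  have inj: "inj_on (psiF a r) {..<d}"
  proof (rule inj_onI)
    fix i j assume ij: "i \<in> {..<d}" "j \<in> {..<d}" "psiF a r i = psiF a r j"
    hence "gen_cyc_map w d a r ` cyc_coset w d i = gen_cyc_map w d a r ` cyc_coset w d j"
      using psiF_img[OF b] by simp
    hence "cyc_coset w d i = cyc_coset w d j" using b unfolding bij_def by (simp add: inj_image_eq_iff)
    thus "i = j" using coset_inj ij by simp
  qed
  moreover have "psiF a r ` {..<d} \<subseteq> {..<d}" using psiF_lt[OF b] by auto
  ultimately have "psiF a r ` {..<d} = {..<d}" using endo_inj_surj by blast
  with inj show "bij_betw (psiF a r) {..<d} {..<d}" unfolding bij_betw_def by blast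
  show "\<And>x. x \<notin> {..<d} \<Longrightarrow> psiF a r x = x" unfolding psiF_def by simp
qed

lemma psi_unique:
  assumes b: "bij (gen_cyc_map w d a r)" and p: "\<psi> permutes {..<d}"
    and img: "\<forall>i<d. gen_cyc_map w d a r ` cyc_coset w d i = cyc_coset w d (\<psi> i)"
  shows "\<psi> = psiF a r"
proof
  fix i show "\<psi> i = psiF a r i"
  proof (cases "i < d")
    case True
    hence "cyc_coset w d (\<psi> i) = cyc_coset w d (psiF a r i)" using img psiF_img[OF b] by simp
    thus ?thesis using coset_inj perm_lt[OF p True] psiF_lt[OF b True] by blast
  next
    case False thus ?thesis using permutes_not_in[OF p] unfolding psiF_def by simp
  qed
qed

lemma F_coprime:
  assumes b: "bij (gen_cyc_map w d a r)" and j: "j < d"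
  shows "coprime (r j) m"
proof -
  define e where "e = gcd (r j) m"
  define m' where "m' = m div e"
  have epos: "e > 0" using m_pos unfolding e_def by simp
  have me: "m = e * m'" unfolding m'_def e_def by simp
  have rj: "r j = e * (r j div e)" unfolding e_def by simp
  have m'pos: "m' > 0" using me m_pos by (cases m') auto
  define z where "z = (w ^ d) ^ m'"
  have zC: "z \<in> C" unfolding z_def using C_pow gen_C by blast
  have eq: "m' * r j = m * (r j div e)"
    by (subst rj, unfold me) (simp only: mult_ac)
  have "z ^ r j = (w ^ d) ^ (m' * r j)" unfolding z_def by (rule power_mult[symmetric])
  also have "\<dots> = (w ^ d) ^ (m * (r j div e))" unfolding eq ..
  also have "\<dots> = ((w ^ d) ^ m) ^ (r j div e)" by (rule power_mult)
  finally have "z ^ r j = ((w ^ d) ^ m) ^ (r j div e)" .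
  hence zr: "z ^ r j = 1" using C_pow_m[OF gen_C] by simp
  have "gen_cyc_map w d a r (z * w ^ j) = gen_cyc_map w d a r (1 * w ^ j)"
    using F_val1[OF zC j] F_val1[OF one_C j] zr by simp
  hence "z * w ^ j = 1 * w ^ j" using b unfolding bij_def inj_def by blast
  hence "z = 1" by simp
  hence "(w ^ d) powi (int m') = 1" unfolding z_def by simp
  hence "int m' mod int m = 0" by (rule gen_powi)
  hence "m' mod m = 0" by (metis of_nat_0 of_nat_eq_iff zmod_int)
  hence "m dvd m'" by (rule mod_0_imp_dvd)
  hence "m \<le> m'" using m'pos by (simp add: dvd_imp_le)
  hence "e * m' \<le> 1 * m'" using me by simp
  hence "e \<le> 1" using m'pos mult_le_cancel2 by blast
  hence "e = 1" using epos by simp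
  thus ?thesis unfolding e_def by (simp add: coprime_iff_gcd_eq_1)
qed

definition Bf where "Bf \<psi> a r i = (let j = inv_into {..<d} \<psi> i in w powi (int (r j) * int j - int i) * a j)"

lemma formula_snd: "snd (iota_inv_formula w d \<psi> a r) i =
   (if i < d then hol_map C (int (r (inv_into {..<d} \<psi> i))) (Bf \<psi> a r i) else id)"
  by (simp add: iota_inv_formula_def Bf_def Let_def C_def)

lemma formula_fst: "fst (iota_inv_formula w d \<psi> a r) = \<psi>"
  by (simp add: iota_inv_formula_def)

lemma Bf_key:
  assumes b: "bij (gen_cyc_map w d a r)" and p: "\<psi> permutes {..<d}"
    and img: "\<forall>i<d. gen_cyc_map w d a r ` cyc_coset w d i = cyc_coset w d (\<psi> i)"
    and j: "j < d"
  shows "Bf \<psi> a r (\<psi> j) \<in> C \<and> a j * w ^ (j * r j) = Bf \<psi> a r (\<psi> j) * w ^ (\<psi> j)"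
proof -
  have "1 * w ^ j \<in> cyc_coset w d j" using coset_iff one_C by blast
  hence "gen_cyc_map w d a r (1 * w ^ j) \<in> cyc_coset w d (\<psi> j)" using img j by blast
  then obtain c0 where c0: "c0 \<in> C" "gen_cyc_map w d a r (1 * w ^ j) = c0 * w ^ (\<psi> j)"
    using coset_iff by blast
  have aj: "a j * w ^ (j * r j) = c0 * w ^ (\<psi> j)"
    using c0(2) gcm_val[OF one_C j, of a r] by (simp add: power_mult)
  have "Bf \<psi> a r (\<psi> j) = w powi (int (r j) * int j - int (\<psi> j)) * a j"
    unfolding Bf_def Let_def perm_inv_left[OF p j] ..
  also have "w powi (int (r j) * int j - int (\<psi> j)) = w ^ (j * r j) / w ^ (\<psi> j)"
  proof -
    have e: "int (r j) * int j - int (\<psi> j) = int (j * r j) - int (\<psi> j)" by simp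
    have "w powi (int (j * r j) - int (\<psi> j)) = w powi int (j * r j) / w powi int (\<psi> j)"
      by (rule power_int_diff) simp
    thus ?thesis unfolding e by (simp only: power_int_of_nat)
  qed
  also have "w ^ (j * r j) / w ^ (\<psi> j) * a j = (a j * w ^ (j * r j)) / w ^ (\<psi> j)" by simp
  also have "\<dots> = c0" unfolding aj by simp
  finally have B: "Bf \<psi> a r (\<psi> j) = c0" .
  show ?thesis using B aj c0(1) by simp
qed

lemma formula_ok:
  assumes rr: "\<forall>i<d. r i \<in> {1..m}" and b: "bij (gen_cyc_map w d a r)" and p: "\<psi> permutes {..<d}"
    and img: "\<forall>i<d. gen_cyc_map w d a r ` cyc_coset w d i = cyc_coset w d (\<psi> i)"
  shows "iota_inv_formula w d \<psi> a r \<in> wr_carrier (Hol C m) d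
    \<and> iota w d (iota_inv_formula w d \<psi> a r) = gen_cyc_map w d a r"
proof -
  define h where "h = snd (iota_inv_formula w d \<psi> a r)"
  have fx: "iota_inv_formula w d \<psi> a r = (\<psi>, h)" unfolding h_def using formula_fst
    by (metis prod.collapse)
  have hH: "h i \<in> Hol C m" if i: "i < d" for i
  proof -
    obtain j where j: "j < d" "\<psi> j = i" using perm_inv_lt[OF p i] by blast
    have jj: "inv_into {..<d} \<psi> i = j" using perm_inv_left[OF p j(1)] j by simp
    have "h i = hol_map C (int (r j)) (Bf \<psi> a r (\<psi> j))" unfolding h_def formula_snd using i jj j by simp
    moreover have "Bf \<psi> a r (\<psi> j) \<in> C" using Bf_key[OF b p img j(1)] by blast
    moreover have "coprime (int (r j)) (int m)" using F_coprime[OF b j(1)] by simp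
    ultimately show ?thesis unfolding Hol_iff by blast
  qed
  have hid: "h i = id" if "d \<le> i" for i unfolding h_def formula_snd using that by simp
  have carr: "(\<psi>, h) \<in> wr_carrier (Hol C m) d" using p hH hid by (simp add: wrc_iff)
  have "iota w d (\<psi>, h) = gen_cyc_map w d a r"
  proof (rule fun_eqE)
    fix c j assume c: "c \<in> C" and j: "j < d"
    have pj: "\<psi> j < d" using perm_lt[OF p j] .
    have hv: "h (\<psi> j) = hol_map C (int (r j)) (Bf \<psi> a r (\<psi> j))"
      unfolding h_def formula_snd using pj perm_inv_left[OF p j] by simp
    obtain B where B: "B = Bf \<psi> a r (\<psi> j)" by blast
    have key: "a j * w ^ (j * r j) = B * w ^ (\<psi> j)" using Bf_key[OF b p img j] B by simp
    have "iota w d (\<psi>, h) (c * w ^ j) = h (\<psi> j) c * w ^ (\<psi> j)" by (rule iota_val[OF carr c j])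
    also have "\<dots> = B * c ^ r j * w ^ (\<psi> j)" unfolding hv B[symmetric] using c by (simp add: hol_in)
    also have "\<dots> = c ^ r j * (B * w ^ (\<psi> j))" by (simp only: mult_ac)
    also have "\<dots> = c ^ r j * (a j * w ^ (j * r j))" unfolding key ..
    also have "\<dots> = a j * (c * w ^ j) ^ r j" by (simp add: power_mult_distrib power_mult mult_ac)
    also have "\<dots> = gen_cyc_map w d a r (c * w ^ j)" by (rule gcm_val[OF c j, symmetric])
    finally show "iota w d (\<psi>, h) (c * w ^ j) = gen_cyc_map w d a r (c * w ^ j)" .
  qed simp_all
  thus ?thesis using carr fx by simp
qed

lemma mm: "(card (UNIV :: 'a set) - 1) div d = m" using n_def m_def by simp

lemma GCP_iff: "f \<in> GCP w d \<longleftrightarrow> (\<exists>a r. f = gen_cyc_map w d a r \<and> (\<forall>i<d. r i \<in> {1..m}) \<and> bij (gen_cyc_map w d a r))"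
  unfolding GCP_def mm by blast

lemma GCP_surj: "f \<in> GCP w d \<Longrightarrow> \<exists>x \<in> wr_carrier (Hol C m) d. iota w d x = f"
proof -
  assume "f \<in> GCP w d"
  then obtain a r where ar: "f = gen_cyc_map w d a r" "\<forall>i<d. r i \<in> {1..m}" "bij (gen_cyc_map w d a r)"
    unfolding GCP_iff by blast
  have "psiF a r permutes {..<d}" using psiF_perm[OF ar(3)] .
  moreover have "\<forall>i<d. gen_cyc_map w d a r ` cyc_coset w d i = cyc_coset w d (psiF a r i)"
    using psiF_img[OF ar(3)] by blast
  ultimately show ?thesis using formula_ok[OF ar(2) ar(3)] ar(1) by blast
qed

lemma iota_iso: "iota w d \<in> iso (wr_group (Hol C m) d) (perm_grp (GCP w d))"
proof -
  have hom: "iota w d \<in> hom (wr_group (Hol C m) d) (perm_grp (GCP w d))"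
    unfolding hom_def using iota_GCP iota_mult by (auto simp: wr_group_def perm_grp_def)
  have "bij_betw (iota w d) (wr_carrier (Hol C m) d) (GCP w d)"
    unfolding bij_betw_def
  proof
    show "inj_on (iota w d) (wr_carrier (Hol C m) d)" using iota_inj by (auto intro: inj_onI)
    show "iota w d ` wr_carrier (Hol C m) d = GCP w d"
      using iota_GCP GCP_surj by blast
  qed
  thus ?thesis using hom unfolding iso_def by (simp add: wr_group_def perm_grp_def)
qed

lemma perm_monoid: "monoid (perm_grp (GCP w d))"
proof (rule monoidI)
  fix f g assume "f \<in> carrier (perm_grp (GCP w d))" "g \<in> carrier (perm_grp (GCP w d))"
  hence fg: "f \<in> GCP w d" "g \<in> GCP w d" by (simp_all add: perm_grp_def)
  obtain x where x: "x \<in> wr_carrier (Hol C m) d" "iota w d x = f" using GCP_surj[OF fg(1)] by blast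
  obtain y where y: "y \<in> wr_carrier (Hol C m) d" "iota w d y = g" using GCP_surj[OF fg(2)] by blast
  have xy: "x \<in> wr_carrier (Hol C m) d" "y \<in> wr_carrier (Hol C m) d" "iota w d x = f" "iota w d y = g"
    using x y by auto
  have "g \<circ> f = iota w d (wr_mult d x y)" using iota_mult[OF xy(1,2)] xy by simp
  moreover have "iota w d (wr_mult d x y) \<in> GCP w d" using iota_GCP wr_closed xy by blast
  ultimately show "f \<otimes>\<^bsub>perm_grp (GCP w d)\<^esub> g \<in> carrier (perm_grp (GCP w d))"
    by (simp add: perm_grp_def)
next
  have "id \<in> GCP w d" using iota_GCP[OF one_carrier] iota_one by simp
  thus "\<one>\<^bsub>perm_grp (GCP w d)\<^esub> \<in> carrier (perm_grp (GCP w d))" by (simp add: perm_grp_def)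
qed (simp_all add: perm_grp_def o_assoc)

lemma perm_group: "group (perm_grp (GCP w d))"
proof -
  interpret G: group "wr_group (Hol C m) d" by (rule wr_group_group)
  show ?thesis
    using G.iso_imp_group[OF _ perm_monoid] iota_iso unfolding is_iso_def by blast
qed

end

context cycs begin

lemma comp_form:
  assumes x: "(\<psi>, g) \<in> wr_carrier (Hol C m) d" and e: "iota w d (\<psi>, g) = gen_cyc_map w d a r"
    and j: "j < d"
  shows "g j = hol_map C (int (r (inv_into {..<d} \<psi> j))) (g j 1)"
proof -
  have p: "\<psi> permutes {..<d}" and gH: "\<forall>k<d. g k \<in> Hol C m" using x by (simp_all add: wrc_iff)
  define i where "i = inv_into {..<d} \<psi> j"
  have i: "i < d" "\<psi> i = j" using perm_inv_lt[OF p j] unfolding i_def by auto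
  have gj: "g j \<in> Hol C m" using gH j by blast
  have v1: "g j 1 * w ^ j = gen_cyc_map w d a r (w ^ i)"
  proof -
    have "iota w d (\<psi>, g) (1 * w ^ i) = g (\<psi> i) 1 * w ^ (\<psi> i)" by (rule iota_val[OF x one_C i(1)])
    thus ?thesis using e i by simp
  qed
  show ?thesis
  proof
    fix z show "g j z = hol_map C (int (r (inv_into {..<d} \<psi> j))) (g j 1) z"
    proof (cases "z \<in> C")
      case True
      have "g j z * w ^ j = iota w d (\<psi>, g) (z * w ^ i)"
        using iota_val[OF x True i(1)] i by simp
      also have "\<dots> = gen_cyc_map w d a r (w ^ i) * z ^ r i" unfolding e by (rule F_val1[OF True i(1)])
      also have "\<dots> = (g j 1 * z ^ r i) * w ^ j" unfolding v1[symmetric] by (simp only: mult_ac)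
      finally have "g j z = g j 1 * z ^ r i" by simp
      thus ?thesis using True unfolding i_def[symmetric] by (simp add: hol_in)
    next
      case False thus ?thesis using Hol_out[OF gj False] hol_out[OF False] by simp
    qed
  qed
qed

lemma rep_unique:
  assumes a: "a \<in> {1..m}" and b: "b \<in> {1..m}" and e: "int a mod int m = int b mod int m"
  shows "a = b"
proof -
  have "int (a mod m) = int (b mod m)" using e by (simp add: zmod_int)
  hence e2: "a mod m = b mod m" by simp
  have rep: "x = (if x mod m = 0 then m else x mod m)" if "x \<in> {1..m}" for x
  proof (cases "x = m")
    case False hence "x < m" using that by simp
    thus ?thesis using that by simp
  qed simp
  have "a = (if a mod m = 0 then m else a mod m)" by (rule rep[OF a])
  also have "\<dots> = (if b mod m = 0 then m else b mod m)" unfolding e2 ..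
  also have "\<dots> = b" by (rule rep[OF b, symmetric])
  finally show ?thesis .
qed

lemma CP_L:
  assumes x: "(\<psi>, g) \<in> wr_carrier (Hol C m) d" and cp: "iota w d (\<psi>, g) \<in> CP w d"
  shows "\<exists>s::int. \<exists>b. coprime s (int m) \<and> (\<forall>i<d. b i \<in> C \<and> g i = hol_map C s (b i))"
proof -
  obtain a r \<rho> where ar: "iota w d (\<psi>, g) = gen_cyc_map w d a r" "\<forall>i<d. r i = \<rho>"
    using cp unfolding CP_def by blast
  have p: "\<psi> permutes {..<d}" and gH: "\<forall>k<d. g k \<in> Hol C m" using x by (simp_all add: wrc_iff)
  have gf: "g j = hol_map C (int \<rho>) (g j 1)" if j: "j < d" for j
  proof -
    have "inv_into {..<d} \<psi> j < d" using perm_inv_lt[OF p j] by blast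
    thus ?thesis using comp_form[OF x ar(1) j] ar(2) by simp
  qed
  have bC: "g j 1 \<in> C" if "j < d" for j using Hol_C gH that one_C by blast
  obtain s0 b0 where s0: "b0 \<in> C" "coprime s0 (int m)" "g 0 = hol_map C s0 b0"
    using gH d_pos unfolding Hol_iff by blast
  have "hol_map C s0 b0 = hol_map C (int \<rho>) (g 0 1)" using s0(3) gf[OF d_pos] by simp
  hence eq: "s0 mod int m = int \<rho> mod int m" using hol_inj s0(1) bC[OF d_pos] by blast
  have nz: "int m \<noteq> 0" using m_pos by simp
  have "coprime (s0 mod int m) (int m)" using s0(2) coprime_mod_left_iff[OF nz, of s0] by blast
  hence "coprime (int \<rho> mod int m) (int m)" unfolding eq .
  hence cop: "coprime (int \<rho>) (int m)" using coprime_mod_left_iff[OF nz, of "int \<rho>"] by blast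
  have "\<forall>i<d. g i 1 \<in> C \<and> g i = hol_map C (int \<rho>) (g i 1)" using gf bC by blast
  with cop show ?thesis by (intro exI[of _ "int \<rho>"] exI[of _ "\<lambda>j. g j 1"]) simp
qed

lemma CP_R:
  assumes p: "\<psi> permutes {..<d}" and s: "coprime s (int m)"
    and b: "\<forall>i<d. b i \<in> C \<and> g i = hol_map C s (b i)" and gid: "\<forall>i. d \<le> i \<longrightarrow> g i = id"
  shows "(\<psi>, g) \<in> wr_carrier (Hol C m) d \<and> iota w d (\<psi>, g) \<in> CP w d"
proof -
  have "g i \<in> Hol C m" if "i < d" for i
  proof -
    have "b i \<in> C" "g i = hol_map C s (b i)" using b that by auto
    thus ?thesis unfolding Hol_iff using s by blast
  qed
  hence x: "(\<psi>, g) \<in> wr_carrier (Hol C m) d" using p gid by (simp add: wrc_iff)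
  define R where "R = (\<lambda>i. fst (hol_param C m (g (\<psi> i))))"
  define A where "A = (\<lambda>i. w powi (int (\<psi> i) - int i * int (fst (hol_param C m (g (\<psi> i))))) * snd (hol_param C m (g (\<psi> i))))"
  have ix: "iota w d (\<psi>, g) = gen_cyc_map w d A R" unfolding iota_unf A_def R_def ..
  have Rp: "R i \<in> {1..m} \<and> int (R i) mod int m = s mod int m" if i: "i < d" for i
  proof -
    have pi: "\<psi> i < d" using perm_lt[OF p i] .
    hence gh: "g (\<psi> i) \<in> Hol C m" "g (\<psi> i) = hol_map C s (b (\<psi> i))" "b (\<psi> i) \<in> C"
      using x b by (auto simp: wrc_iff)
    show ?thesis unfolding R_def using hol_param_spec[OF gh(1)] hol_param_unique[OF gh] by blast
  qed
  have Rc: "\<forall>i<d. R i = R 0"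
  proof (intro allI impI)
    fix i assume i: "i < d"
    have a: "R i \<in> {1..m}" "int (R i) mod int m = s mod int m" using Rp[OF i] by auto
    have b: "R 0 \<in> {1..m}" "int (R 0) mod int m = s mod int m" using Rp[OF d_pos] by auto
    show "R i = R 0" by (rule rep_unique[OF a(1) b(1)]) (simp only: a(2) b(2))
  qed
  have bij: "bij (gen_cyc_map w d A R)" using iota_bij[OF x] ix by simp
  have Rr: "\<forall>i<d. R i \<in> {1..(card (UNIV :: 'a set) - 1) div d}" using Rp unfolding mm by blast
  have "\<exists>a r. gen_cyc_map w d A R = gen_cyc_map w d a r \<and> (\<forall>i<d. r i \<in> {1..(card (UNIV :: 'a set) - 1) div d})
     \<and> (\<exists>\<rho>. \<forall>i<d. r i = \<rho>) \<and> bij (gen_cyc_map w d a r)"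
    apply (rule exI[of _ A], rule exI[of _ R], intro conjI)
       apply (rule refl)
      apply (rule Rr)
     apply (rule exI[of _ "R 0"], rule Rc)
    by (rule bij)
  hence "gen_cyc_map w d A R \<in> CP w d" unfolding CP_def mem_Collect_eq .
  thus ?thesis using x ix by simp
qed

lemma FOCP_L:
  assumes x: "(\<psi>, g) \<in> wr_carrier (Hol C m) d" and cp: "iota w d (\<psi>, g) \<in> FOCP w d"
  shows "\<exists>b. \<forall>i<d. b i \<in> C \<and> g i = hol_map C 1 (b i)"
proof -
  obtain a r where ar: "iota w d (\<psi>, g) = gen_cyc_map w d a r" "\<forall>i<d. r i = 1"
    using cp unfolding FOCP_def by blast
  have p: "\<psi> permutes {..<d}" and gH: "\<forall>k<d. g k \<in> Hol C m" using x by (simp_all add: wrc_iff)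
  have gf: "g j = hol_map C 1 (g j 1)" if j: "j < d" for j
  proof -
    have "inv_into {..<d} \<psi> j < d" using perm_inv_lt[OF p j] by blast
    thus ?thesis using comp_form[OF x ar(1) j] ar(2) by simp
  qed
  have bC: "g j 1 \<in> C" if "j < d" for j using Hol_C gH that one_C by blast
  have "\<forall>i<d. g i 1 \<in> C \<and> g i = hol_map C 1 (g i 1)" using gf bC by blast
  thus ?thesis by (intro exI[of _ "\<lambda>j. g j 1"]) simp
qed

lemma FOCP_R:
  assumes p: "\<psi> permutes {..<d}"
    and b: "\<forall>i<d. b i \<in> C \<and> g i = hol_map C 1 (b i)" and gid: "\<forall>i. d \<le> i \<longrightarrow> g i = id"
  shows "(\<psi>, g) \<in> wr_carrier (Hol C m) d \<and> iota w d (\<psi>, g) \<in> FOCP w d"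
proof -
  have cp: "coprime (1::int) (int m)" by simp
  have x: "(\<psi>, g) \<in> wr_carrier (Hol C m) d" using CP_R[OF p cp b gid] by blast
  define R where "R = (\<lambda>i. fst (hol_param C m (g (\<psi> i))))"
  define A where "A = (\<lambda>i. w powi (int (\<psi> i) - int i * int (fst (hol_param C m (g (\<psi> i))))) * snd (hol_param C m (g (\<psi> i))))"
  have ix: "iota w d (\<psi>, g) = gen_cyc_map w d A R" unfolding iota_unf A_def R_def ..
  have R1: "R i = 1" if i: "i < d" for i
  proof -
    have pi: "\<psi> i < d" using perm_lt[OF p i] .
    hence gh: "g (\<psi> i) \<in> Hol C m" "g (\<psi> i) = hol_map C 1 (b (\<psi> i))" "b (\<psi> i) \<in> C"
      using x b by (auto simp: wrc_iff)
    have "R i \<in> {1..m}" "int (R i) mod int m = 1 mod int m"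
      unfolding R_def using hol_param_spec[OF gh(1)] hol_param_unique[OF gh] by auto
    moreover have "(1::nat) \<in> {1..m}" using m_pos by simp
    ultimately show ?thesis using rep_unique[of "R i" 1] by simp
  qed
  have bij: "bij (gen_cyc_map w d A R)" using iota_bij[OF x] ix by simp
  have "\<exists>a r. gen_cyc_map w d A R = gen_cyc_map w d a r \<and> (\<forall>i<d. r i = 1) \<and> bij (gen_cyc_map w d a r)"
    apply (rule exI[of _ A], rule exI[of _ R], intro conjI)
      apply (rule refl)
     using R1 apply blast
    by (rule bij)
  hence "gen_cyc_map w d A R \<in> FOCP w d" unfolding FOCP_def mem_Collect_eq .
  thus ?thesis using x ix by simp
qed

lemma wr_mono: "G1 \<subseteq> G2 \<Longrightarrow> wr_carrier G1 d \<subseteq> wr_carrier G2 d"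
  unfolding wr_carrier_def by blast

lemma Creg_sub: "{hol_map C 1 c | c. c \<in> C} \<subseteq> Hol C m"
proof
  fix f assume "f \<in> {hol_map C 1 c | c. c \<in> C}"
  then obtain c where c: "c \<in> C" "f = hol_map C 1 c" by blast
  show "f \<in> Hol C m" unfolding Hol_iff using c by (intro exI[of _ 1] exI[of _ c]) simp
qed

lemma Creg_comp: "f \<in> {hol_map C 1 c | c. c \<in> C} \<Longrightarrow> g \<in> {hol_map C 1 c | c. c \<in> C} \<Longrightarrow>
   f \<circ> g \<in> {hol_map C 1 c | c. c \<in> C}"
proof -
  assume "f \<in> {hol_map C 1 c | c. c \<in> C}" "g \<in> {hol_map C 1 c | c. c \<in> C}"
  then obtain c c' where cc: "c \<in> C" "c' \<in> C" "f = hol_map C 1 c" "g = hol_map C 1 c'" by blast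
  hence "f \<circ> g = hol_map C 1 (c * c')" using hol_comp[OF cc(1,2), of 1 1] by simp
  moreover have "c * c' \<in> C" using C_mult cc by blast
  ultimately show ?thesis by blast
qed

lemma Creg_eq: "wr_carrier {hol_map C 1 c | c. c \<in> C} d =
  {(\<psi>, g). \<psi> permutes {..<d} \<and> (\<exists>b. \<forall>i<d. b i \<in> C \<and> g i = hol_map C 1 (b i)) \<and> (\<forall>i. d \<le> i \<longrightarrow> g i = id)}"
proof (rule Set.set_eqI)
  fix x :: "(nat \<Rightarrow> nat) \<times> (nat \<Rightarrow> 'a \<Rightarrow> 'a)"
  obtain \<psi> g where xx: "x = (\<psi>, g)" by (cases x) blast
  have "(\<forall>i<d. g i \<in> {hol_map C 1 c | c. c \<in> C}) \<longleftrightarrow> (\<exists>b. \<forall>i<d. b i \<in> C \<and> g i = hol_map C 1 (b i))"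
  proof
    assume h: "\<forall>i<d. g i \<in> {hol_map C 1 c | c. c \<in> C}"
    define b where "b i = (SOME c. c \<in> C \<and> g i = hol_map C 1 c)" for i
    have "b i \<in> C \<and> g i = hol_map C 1 (b i)" if "i < d" for i
    proof -
      have "\<exists>c. c \<in> C \<and> g i = hol_map C 1 c" using h that by blast
      thus ?thesis unfolding b_def by (rule someI_ex)
    qed
    thus "\<exists>b. \<forall>i<d. b i \<in> C \<and> g i = hol_map C 1 (b i)" by blast
  next
    assume "\<exists>b. \<forall>i<d. b i \<in> C \<and> g i = hol_map C 1 (b i)"
    then obtain b where b: "\<forall>i<d. b i \<in> C \<and> g i = hol_map C 1 (b i)" by blast
    show "\<forall>i<d. g i \<in> {hol_map C 1 c | c. c \<in> C}"
    proof (intro allI impI)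
      fix i assume "i < d" thus "g i \<in> {hol_map C 1 c | c. c \<in> C}" using b by blast
    qed
  qed
  note iff = this
  have A: "x \<in> wr_carrier {hol_map C 1 c | c. c \<in> C} d \<longleftrightarrow> \<psi> permutes {..<d} \<and> (\<forall>i<d. g i \<in> {hol_map C 1 c | c. c \<in> C}) \<and> (\<forall>i. d \<le> i \<longrightarrow> g i = id)"
    unfolding xx by (rule wrc_iff)
  have B: "x \<in> {(\<psi>, g). \<psi> permutes {..<d} \<and> (\<exists>b. \<forall>i<d. b i \<in> C \<and> g i = hol_map C 1 (b i)) \<and> (\<forall>i. d \<le> i \<longrightarrow> g i = id)}
     \<longleftrightarrow> \<psi> permutes {..<d} \<and> (\<exists>b. \<forall>i<d. b i \<in> C \<and> g i = hol_map C 1 (b i)) \<and> (\<forall>i. d \<le> i \<longrightarrow> g i = id)"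
    unfolding xx by (simp only: mem_Collect_eq prod.case)
  show "x \<in> wr_carrier {hol_map C 1 c | c. c \<in> C} d \<longleftrightarrow> x \<in> {(\<psi>, g). \<psi> permutes {..<d} \<and> (\<exists>b. \<forall>i<d. b i \<in> C \<and> g i = hol_map C 1 (b i)) \<and> (\<forall>i. d \<le> i \<longrightarrow> g i = id)}"
    unfolding A B iff ..
qed

lemma Creg_subgroup: "subgroup (wr_carrier {hol_map C 1 c | c. c \<in> C} d) (wr_group (Hol C m) d)"
proof -
  interpret G: group "wr_group (Hol C m) d" by (rule wr_group_group)
  let ?H = "wr_carrier {hol_map C 1 c | c. c \<in> C} d"
  have sub: "?H \<subseteq> wr_carrier (Hol C m) d" using wr_mono[OF Creg_sub] .
  show ?thesis
  proof (rule subgroup.intro)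
    show "?H \<subseteq> carrier (wr_group (Hol C m) d)" using sub by (simp add: wr_group_def)
    show "\<And>x y. x \<in> ?H \<Longrightarrow> y \<in> ?H \<Longrightarrow> x \<otimes>\<^bsub>wr_group (Hol C m) d\<^esub> y \<in> ?H"
      using wr_mult_closed[OF Creg_comp] by (simp add: wr_group_def)
    have "hol_map C 1 1 \<in> {hol_map C 1 c | c. c \<in> C}" using one_C by blast
    hence "id \<in> {hol_map C 1 c | c. c \<in> C}" using hol_id by simp
    thus "\<one>\<^bsub>wr_group (Hol C m) d\<^esub> \<in> ?H" by (simp add: wr_group_def wrc_iff)
  next
    fix x assume xH: "x \<in> ?H"
    obtain \<sigma> g where xx: "x = (\<sigma>, g)" by (cases x) blast
    have xH': "(\<sigma>, g) \<in> ?H" using xH xx by simp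
    have gC: "\<forall>i<d. g i \<in> {hol_map C 1 c | c. c \<in> C}" using xH' by (simp add: wrc_iff)
    define gi where "gi j = hol_map C 1 (inverse (SOME c. c \<in> C \<and> g j = hol_map C 1 c))" for j
    have gi: "gi j \<in> {hol_map C 1 c | c. c \<in> C} \<and> g j \<circ> gi j = id" if j: "j < d" for j
    proof -
      define c where "c = (SOME c. c \<in> C \<and> g j = hol_map C 1 c)"
      have "\<exists>c. c \<in> C \<and> g j = hol_map C 1 c" using gC j by blast
      hence "c \<in> C \<and> g j = hol_map C 1 c" unfolding c_def by (rule someI_ex)
      hence c: "c \<in> C" "g j = hol_map C 1 c" by blast+
      have ic: "inverse c \<in> C" using C_inverse c(1) by blast
      have gij: "gi j = hol_map C 1 (inverse c)" unfolding gi_def c_def ..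
      have "g j \<circ> gi j = hol_map C 1 c \<circ> hol_map C 1 (inverse c)" unfolding gij using c(2) by simp
      also have "\<dots> = hol_map C 1 (c * inverse c)" using hol_comp[OF c(1) ic, of 1 1] by simp
      also have "\<dots> = id" using C_nz[OF c(1)] hol_id by simp
      finally show ?thesis unfolding gij using ic by blast
    qed
    from wr_inv[OF xH', of gi, OF gi]
    have y: "(Hilbert_Choice.inv \<sigma>, \<lambda>k. if k < d then gi (\<sigma> k) else id) \<in> ?H"
      and e: "wr_mult d (Hilbert_Choice.inv \<sigma>, \<lambda>k. if k < d then gi (\<sigma> k) else id) (\<sigma>, g) = (id, \<lambda>_. id)"
      by blast+
    let ?y = "(Hilbert_Choice.inv \<sigma>, \<lambda>k. if k < d then gi (\<sigma> k) else id)"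
    have yc: "?y \<in> carrier (wr_group (Hol C m) d)" using y sub by (auto simp: wr_group_def)
    have xc: "x \<in> carrier (wr_group (Hol C m) d)" using xH sub by (auto simp: wr_group_def)
    have e': "?y \<otimes>\<^bsub>wr_group (Hol C m) d\<^esub> x = \<one>\<^bsub>wr_group (Hol C m) d\<^esub>"
      using e unfolding xx by (simp add: wr_group_def)
    have "inv\<^bsub>wr_group (Hol C m) d\<^esub> x = ?y" by (rule G.inv_equality[OF e' xc yc])
    thus "inv\<^bsub>wr_group (Hol C m) d\<^esub> x \<in> ?H" using y by simp
  qed
qed

end

context cycs begin

lemma act_ok: "\<forall>g \<in> wr_carrier (Hol C m) d. \<forall>x \<in> C \<times> {..<d}. beta w (wr_act g x) = iota w d g (beta w x)"
proof (intro ballI)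
  fix g x assume g: "g \<in> wr_carrier (Hol C m) d" and x: "x \<in> C \<times> {..<d}"
  obtain \<psi> h where gg: "g = (\<psi>, h)" by (cases g) blast
  obtain c i where xx: "x = (c, i)" "c \<in> C" "i < d" using x by blast
  have "iota w d (\<psi>, h) (c * w ^ i) = h (\<psi> i) c * w ^ (\<psi> i)" by (rule iota_val[OF g[unfolded gg] xx(2,3)])
  thus "beta w (wr_act g x) = iota w d g (beta w x)" unfolding gg xx(1) by simp
qed

lemma inv_part:
  "\<forall>a r. (\<forall>i<d. r i \<in> {1..m}) \<and> bij (gen_cyc_map w d a r) \<longrightarrow>
          (\<exists>!\<psi>. \<psi> permutes {..<d} \<and>
               (\<forall>i<d. gen_cyc_map w d a r ` cyc_coset w d i = cyc_coset w d (\<psi> i)))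
        \<and> (\<forall>\<psi>. \<psi> permutes {..<d} \<and>
               (\<forall>i<d. gen_cyc_map w d a r ` cyc_coset w d i = cyc_coset w d (\<psi> i)) \<longrightarrow>
             the_inv_into (wr_carrier (Hol C m) d) (iota w d) (gen_cyc_map w d a r)
               = iota_inv_formula w d \<psi> a r)"
proof (intro allI impI conjI)
  fix a r assume ar: "(\<forall>i<d. r i \<in> {1..m}) \<and> bij (gen_cyc_map w d a r)"
  hence rr: "\<forall>i<d. r i \<in> {1..m}" and b: "bij (gen_cyc_map w d a r)" by blast+
  show "\<exists>!\<psi>. \<psi> permutes {..<d} \<and> (\<forall>i<d. gen_cyc_map w d a r ` cyc_coset w d i = cyc_coset w d (\<psi> i))"
  proof (rule ex1I[of _ "psiF a r"])
    show "psiF a r permutes {..<d} \<and> (\<forall>i<d. gen_cyc_map w d a r ` cyc_coset w d i = cyc_coset w d (psiF a r i))"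
      using psiF_perm[OF b] psiF_img[OF b] by blast
    fix \<psi> assume "\<psi> permutes {..<d} \<and> (\<forall>i<d. gen_cyc_map w d a r ` cyc_coset w d i = cyc_coset w d (\<psi> i))"
    thus "\<psi> = psiF a r" using psi_unique[OF b] by blast
  qed
next
  fix a r \<psi> assume ar: "(\<forall>i<d. r i \<in> {1..m}) \<and> bij (gen_cyc_map w d a r)"
    and pi: "\<psi> permutes {..<d} \<and> (\<forall>i<d. gen_cyc_map w d a r ` cyc_coset w d i = cyc_coset w d (\<psi> i))"
  from ar have rr: "\<forall>i<d. r i \<in> {1..m}" and b: "bij (gen_cyc_map w d a r)" by blast+
    from pi have p: "\<psi> permutes {..<d}" and img: "\<forall>i<d. gen_cyc_map w d a r ` cyc_coset w d i = cyc_coset w d (\<psi> i)"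
      by blast+
    have fo: "iota_inv_formula w d \<psi> a r \<in> wr_carrier (Hol C m) d"
      "iota w d (iota_inv_formula w d \<psi> a r) = gen_cyc_map w d a r"
      using formula_ok[OF rr b p img] by blast+
    have inj: "inj_on (iota w d) (wr_carrier (Hol C m) d)" using iota_inj by (auto intro: inj_onI)
    show "the_inv_into (wr_carrier (Hol C m) d) (iota w d) (gen_cyc_map w d a r) = iota_inv_formula w d \<psi> a r"
      by (rule the_inv_into_f_eq[OF inj fo(2) fo(1)])
qed

lemma CP_part: "{x \<in> wr_carrier (Hol C m) d. iota w d x \<in> CP w d}
        = {(\<psi>, g). \<psi> permutes {..<d} \<and>
             (\<exists>s::int. \<exists>b. coprime s (int m) \<and> (\<forall>i<d. b i \<in> C \<and> g i = hol_map C s (b i)))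
             \<and> (\<forall>i. d \<le> i \<longrightarrow> g i = id)}"
proof (rule Set.set_eqI)
  fix x :: "(nat \<Rightarrow> nat) \<times> (nat \<Rightarrow> 'a \<Rightarrow> 'a)"
  obtain \<psi> g where xx: "x = (\<psi>, g)" by (cases x) blast
  show "x \<in> {x \<in> wr_carrier (Hol C m) d. iota w d x \<in> CP w d} \<longleftrightarrow> x \<in> {(\<psi>, g). \<psi> permutes {..<d} \<and>
             (\<exists>s::int. \<exists>b. coprime s (int m) \<and> (\<forall>i<d. b i \<in> C \<and> g i = hol_map C s (b i)))
             \<and> (\<forall>i. d \<le> i \<longrightarrow> g i = id)}"
  proof
    assume "x \<in> {x \<in> wr_carrier (Hol C m) d. iota w d x \<in> CP w d}"
    hence h: "(\<psi>, g) \<in> wr_carrier (Hol C m) d" "iota w d (\<psi>, g) \<in> CP w d" using xx by simp_all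
    have "\<psi> permutes {..<d}" "\<forall>i. d \<le> i \<longrightarrow> g i = id" using h(1) by (simp_all add: wrc_iff)
    moreover have "\<exists>s::int. \<exists>b. coprime s (int m) \<and> (\<forall>i<d. b i \<in> C \<and> g i = hol_map C s (b i))"
      by (rule CP_L[OF h])
    ultimately show "x \<in> {(\<psi>, g). \<psi> permutes {..<d} \<and>
             (\<exists>s::int. \<exists>b. coprime s (int m) \<and> (\<forall>i<d. b i \<in> C \<and> g i = hol_map C s (b i)))
             \<and> (\<forall>i. d \<le> i \<longrightarrow> g i = id)}" unfolding xx by simp
  next
    assume "x \<in> {(\<psi>, g). \<psi> permutes {..<d} \<and>
             (\<exists>s::int. \<exists>b. coprime s (int m) \<and> (\<forall>i<d. b i \<in> C \<and> g i = hol_map C s (b i)))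
             \<and> (\<forall>i. d \<le> i \<longrightarrow> g i = id)}"
    hence h: "\<psi> permutes {..<d}" "\<exists>s::int. \<exists>b. coprime s (int m) \<and> (\<forall>i<d. b i \<in> C \<and> g i = hol_map C s (b i))"
      "\<forall>i. d \<le> i \<longrightarrow> g i = id" unfolding xx by simp_all
    then obtain s b where sb: "coprime s (int m)" "\<forall>i<d. b i \<in> C \<and> g i = hol_map C s (b i)" by blast
    have "(\<psi>, g) \<in> wr_carrier (Hol C m) d \<and> iota w d (\<psi>, g) \<in> CP w d" by (rule CP_R[OF h(1) sb h(3)])
    thus "x \<in> {x \<in> wr_carrier (Hol C m) d. iota w d x \<in> CP w d}" unfolding xx by simp
  qed
qed

lemma FOCP_part: "{x \<in> wr_carrier (Hol C m) d. iota w d x \<in> FOCP w d}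
        = {(\<psi>, g). \<psi> permutes {..<d} \<and>
             (\<exists>b. \<forall>i<d. b i \<in> C \<and> g i = hol_map C 1 (b i)) \<and> (\<forall>i. d \<le> i \<longrightarrow> g i = id)}"
proof (rule Set.set_eqI)
  fix x :: "(nat \<Rightarrow> nat) \<times> (nat \<Rightarrow> 'a \<Rightarrow> 'a)"
  obtain \<psi> g where xx: "x = (\<psi>, g)" by (cases x) blast
  show "x \<in> {x \<in> wr_carrier (Hol C m) d. iota w d x \<in> FOCP w d} \<longleftrightarrow> x \<in> {(\<psi>, g). \<psi> permutes {..<d} \<and>
             (\<exists>b. \<forall>i<d. b i \<in> C \<and> g i = hol_map C 1 (b i)) \<and> (\<forall>i. d \<le> i \<longrightarrow> g i = id)}"
  proof
    assume "x \<in> {x \<in> wr_carrier (Hol C m) d. iota w d x \<in> FOCP w d}"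
    hence h: "(\<psi>, g) \<in> wr_carrier (Hol C m) d" "iota w d (\<psi>, g) \<in> FOCP w d" using xx by simp_all
    have "\<psi> permutes {..<d}" "\<forall>i. d \<le> i \<longrightarrow> g i = id" using h(1) by (simp_all add: wrc_iff)
    moreover have "\<exists>b. \<forall>i<d. b i \<in> C \<and> g i = hol_map C 1 (b i)" by (rule FOCP_L[OF h])
    ultimately show "x \<in> {(\<psi>, g). \<psi> permutes {..<d} \<and>
             (\<exists>b. \<forall>i<d. b i \<in> C \<and> g i = hol_map C 1 (b i)) \<and> (\<forall>i. d \<le> i \<longrightarrow> g i = id)}"
      unfolding xx by simp
  next
    assume "x \<in> {(\<psi>, g). \<psi> permutes {..<d} \<and>
             (\<exists>b. \<forall>i<d. b i \<in> C \<and> g i = hol_map C 1 (b i)) \<and> (\<forall>i. d \<le> i \<longrightarrow> g i = id)}"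
    hence h: "\<psi> permutes {..<d}" "\<exists>b. \<forall>i<d. b i \<in> C \<and> g i = hol_map C 1 (b i)"
      "\<forall>i. d \<le> i \<longrightarrow> g i = id" unfolding xx by simp_all
    then obtain b where sb: "\<forall>i<d. b i \<in> C \<and> g i = hol_map C 1 (b i)" by blast
    have "(\<psi>, g) \<in> wr_carrier (Hol C m) d \<and> iota w d (\<psi>, g) \<in> FOCP w d" by (rule FOCP_R[OF h(1) sb h(3)])
    thus "x \<in> {x \<in> wr_carrier (Hol C m) d. iota w d x \<in> FOCP w d}" unfolding xx by simp
  qed
qed

end

theorem theorem1:
  fixes w :: "'a::{field,finite}" and d :: nat
  defines "m \<equiv> (card (UNIV :: 'a set) - 1) div d"
      and "C \<equiv> (subgrpC d :: 'a set)"
  assumes "0 < d" and "d dvd card (UNIV :: 'a set) - 1" and "primitive_root w"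
  shows "bij_betw (beta w) (C \<times> {..<d}) (UNIV - {0})
    \<and> group (wr_group (Hol C m) d) \<and> group (perm_grp (GCP w d))
    \<and> iota w d \<in> iso (wr_group (Hol C m) d) (perm_grp (GCP w d))
    \<and> (\<forall>g \<in> wr_carrier (Hol C m) d. \<forall>x \<in> C \<times> {..<d}.
          beta w (wr_act g x) = iota w d g (beta w x))
    \<and> (\<forall>a r. (\<forall>i<d. r i \<in> {1..m}) \<and> bij (gen_cyc_map w d a r) \<longrightarrow>
          (\<exists>!\<psi>. \<psi> permutes {..<d} \<and>
               (\<forall>i<d. gen_cyc_map w d a r ` cyc_coset w d i = cyc_coset w d (\<psi> i)))
        \<and> (\<forall>\<psi>. \<psi> permutes {..<d} \<and>
               (\<forall>i<d. gen_cyc_map w d a r ` cyc_coset w d i = cyc_coset w d (\<psi> i)) \<longrightarrow>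
             the_inv_into (wr_carrier (Hol C m) d) (iota w d) (gen_cyc_map w d a r)
               = iota_inv_formula w d \<psi> a r))
    \<and> {x \<in> wr_carrier (Hol C m) d. iota w d x \<in> CP w d}
        = {(\<psi>, g). \<psi> permutes {..<d} \<and>
             (\<exists>s::int. \<exists>b. coprime s (int m) \<and> (\<forall>i<d. b i \<in> C \<and> g i = hol_map C s (b i)))
             \<and> (\<forall>i. d \<le> i \<longrightarrow> g i = id)}
    \<and> {x \<in> wr_carrier (Hol C m) d. iota w d x \<in> FOCP w d}
        = {(\<psi>, g). \<psi> permutes {..<d} \<and>
             (\<exists>b. \<forall>i<d. b i \<in> C \<and> g i = hol_map C 1 (b i)) \<and> (\<forall>i. d \<le> i \<longrightarrow> g i = id)}
    \<and> {x \<in> wr_carrier (Hol C m) d. iota w d x \<in> FOCP w d}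
        = wr_carrier {hol_map C 1 c | c. c \<in> C} d
    \<and> subgroup (wr_carrier {hol_map C 1 c | c. c \<in> C} d) (wr_group (Hol C m) d)"
proof -
  interpret cycs w d "card (UNIV :: 'a set) - 1" m C
    by unfold_locales (use assms in simp_all)
  show ?thesis
    apply (intro conjI)
             apply (rule beta_bij)
            apply (rule wr_group_group)
           apply (rule perm_group)
          apply (rule iota_iso)
         apply (rule act_ok)
        apply (rule inv_part)
       apply (rule CP_part)
      apply (rule FOCP_part)
     apply (rule FOCP_part[unfolded Creg_eq[symmetric]])
    by (rule Creg_subgroup)
qed

end
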